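(* (1) $\mathsf{WFT}_{\mathbb S}\le_W\mathsf T\mathsf C_{\mathbb N^\mathbb N}$ and $\mathsf{WFT}_{\mathbb S}\not\le_W\overline{\mathsf C_{\mathbb N^\mathbb N}}$. (2) $\mathsf{WFT}\le_W\mathsf C_{\mathbb N^\mathbb N}*\mathsf T\mathsf C_{\mathbb N^\mathbb N}$ and $\mathsf{WFT}\not\le_W\mathsf T\mathsf C_{\mathbb N^\mathbb N}$.
   Context: A problem $f:\subseteq X\rightrightarrows Y$ between represented spaces is a partial multi-valued map; $F\vdash f$ means $\delta_YF(p)\in f(\delta_X(p))$ whenever $\delta_X(p)\in\mathrm{dom}(f)$; $f\le_W g$ iff there are computable partial $H,K$ with $H\langle\mathrm{id},GK\rangle\vdash f$ for all $G\vdash g$. The compositional product $f*g$ is a problem representing the $\le_W$-maximum of $\{f_0\circ g_0:f_0\le_Wf,\ g_0\le_Wg\}$ (which exists). $\mathcal A_-(\mathbb N^\mathbb N)$ is the space of closed subsets of Baire space represented by $p\mapsto\mathbb N^\mathbb N\setminus\bigcup_nB_{p(n)}$ for a standard enumeration $(B_n)$ of basic open sets (including empty ones). $\mathsf C_{\mathbb N^\mathbb N}:\subseteq\mathcal A_-(\mathbb N^\mathbb N)\rightrightarrows\mathbb N^\mathbb N$, $A\mapsto A$, on nonempty $A$. $\mathsf{WFT}:\mathcal A_-(\mathbb N^\mathbb N)\to\{0,1\}$ gives $1$ iff $A=\emptyset$ ($\{0,1\}$ represented by $p\mapsto p(0)$), and $\mathsf{WFT}_{\mathbb S}$ is the same map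 with target Sierpiński space $\mathbb S=\{0,1\}$ represented by $\delta_{\mathbb S}(p)=0\iff p=000\dots$. For $p\in\mathbb{N}^\mathbb{N}$, $p-1$ is the concatenation of $p(0)-1,p(1)-1,\dots$ with $0-1$ the empty word; the completion of $(X,\delta_X)$ is $\overline X=X\cup\{\bot\}$ with $\delta_{\overline X}(p)=\delta_X(p-1)$ if $p-1$ is an infinite sequence in $\mathrm{dom}(\delta_X)$, $\bot$ otherwise. For $f:\subseteq X\rightrightarrows Y$: $\overline f:\overline X\rightrightarrows\overline Y$ equals $f$ on $\mathrm{dom}(f)$ and $\overline Y$ elsewhere; $\mathsf Tf:X\rightrightarrows Y$ equals $f$ on $\mathrm{dom}(f)$ and $Y$ elsewhere. *)

theory Defs
  imports Main "HOL-Library.Nat_Bijection" "HOL-Library.Infinite_Set"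
begin

type_synonym baire = "nat \<Rightarrow> nat"

datatype recf = Zr | Sc | Proj nat | Comp recf "recf list" | Prim recf recf | Mn recf | Orc

inductive ev :: "baire \<Rightarrow> recf \<Rightarrow> nat list \<Rightarrow> nat \<Rightarrow> bool" for p :: baire where
  ev_Zr: "ev p Zr xs 0"
| ev_Sc: "ev p Sc (x # xs) (Suc x)"
| ev_Proj: "i < length xs \<Longrightarrow> ev p (Proj i) xs (xs ! i)"
| ev_Comp: "list_all2 (\<lambda>g y. ev p g xs y) gs ys \<Longrightarrow> ev p f ys z \<Longrightarrow> ev p (Comp f gs) xs z"
| ev_Prim0: "ev p f xs z \<Longrightarrow> ev p (Prim f g) (0 # xs) z"
| ev_PrimS: "ev p (Prim f g) (n # xs) r \<Longrightarrow> ev p g (r # n # xs) z \<Longrightarrow> ev p (Prim f g) (Suc n # xs) z"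
| ev_Mn: "ev p f (n # xs) 0 \<Longrightarrow> (\<forall>m<n. \<exists>y. 0 < y \<and> ev p f (m # xs) y) \<Longrightarrow> ev p (Mn f) xs n"
| ev_Orc: "ev p Orc (x # xs) (p x)"

definition computable :: "(baire \<Rightarrow> baire option) \<Rightarrow> bool" where
  "computable F \<longleftrightarrow> (\<exists>e. \<forall>p q. F p = Some q \<longrightarrow> (\<forall>n. ev p e [n] (q n)))"

definition pair :: "baire \<Rightarrow> baire \<Rightarrow> baire" where
  "pair p q = (\<lambda>n. if even n then p (n div 2) else q (n div 2))"

text \<open>A represented space is a type together with a partial map delta from Baire space
  (None = p not a name).  A problem f is a set-valued map; its domain is {x. f x \<noteq> {}}.\<close>

definition realizes :: "(baire \<Rightarrow> 'a option) \<Rightarrow> (baire \<Rightarrow> 'b option) \<Rightarrow> ('a \<Rightarrow> 'b set)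
    \<Rightarrow> (baire \<Rightarrow> baire option) \<Rightarrow> bool" where
  "realizes dX dY f F \<longleftrightarrow>
     (\<forall>p x. dX p = Some x \<and> f x \<noteq> {} \<longrightarrow>
        (\<exists>q y. F p = Some q \<and> dY q = Some y \<and> y \<in> f x))"

definition weihrauch_le ::
  "(baire \<Rightarrow> 'a option) \<Rightarrow> (baire \<Rightarrow> 'b option) \<Rightarrow> ('a \<Rightarrow> 'b set) \<Rightarrow>
   (baire \<Rightarrow> 'c option) \<Rightarrow> (baire \<Rightarrow> 'd option) \<Rightarrow> ('c \<Rightarrow> 'd set) \<Rightarrow> bool" where
  "weihrauch_le dX dY f dU dV g \<longleftrightarrow>
     (\<exists>H K. computable H \<and> computable K \<and>
        (\<forall>G. realizes dU dV g G \<longrightarrow>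
           realizes dX dY f (\<lambda>p. case K p of None \<Rightarrow> None
                                 | Some k \<Rightarrow> (case G k of None \<Rightarrow> None
                                               | Some r \<Rightarrow> H (pair p r)))))"

definition pcomp :: "('b \<Rightarrow> 'c set) \<Rightarrow> ('a \<Rightarrow> 'b set) \<Rightarrow> 'a \<Rightarrow> 'c set" where
  "pcomp f g x = (if g x \<noteq> {} \<and> (\<forall>y\<in>g x. f y \<noteq> {}) then (\<Union>y\<in>g x. f y) else {})"

definition delta_baire :: "baire \<Rightarrow> baire option" where
  "delta_baire p = Some p"

text \<open>f \<le>_W h * g, where h * g is the compositional product, i.e. (a problem representing)
  the maximum of {h0 \<circ> g0 : h0 \<le>_W h, g0 \<le>_W g}.  Every problem is Weihrauch equivalent to a
  problem on Baire space with identity representation (its realizer version), and the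
  composition can be transported accordingly, so the maximum is attained by compositions of
  problems on Baire space.\<close>

definition weihrauch_le_cprod ::
  "(baire \<Rightarrow> 'a option) \<Rightarrow> (baire \<Rightarrow> 'b option) \<Rightarrow> ('a \<Rightarrow> 'b set) \<Rightarrow>
   (baire \<Rightarrow> 'c option) \<Rightarrow> (baire \<Rightarrow> 'd option) \<Rightarrow> ('c \<Rightarrow> 'd set) \<Rightarrow>
   (baire \<Rightarrow> 'e option) \<Rightarrow> (baire \<Rightarrow> 'g option) \<Rightarrow> ('e \<Rightarrow> 'g set) \<Rightarrow> bool" where
  "weihrauch_le_cprod dX dY f dU dV h dR dS g \<longleftrightarrow>
     (\<exists>(h0 :: baire \<Rightarrow> baire set) (g0 :: baire \<Rightarrow> baire set).
        weihrauch_le delta_baire delta_baire h0 dU dV h \<and>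
        weihrauch_le delta_baire delta_baire g0 dR dS g \<and>
        weihrauch_le dX dY f delta_baire delta_baire (pcomp h0 g0))"

definition basic_open :: "nat \<Rightarrow> baire set" where
  "basic_open n = (case n of 0 \<Rightarrow> {}
     | Suc m \<Rightarrow> {q. \<forall>i < length (list_decode m). q i = list_decode m ! i})"

definition delta_closed :: "baire \<Rightarrow> baire set option" where
  "delta_closed p = Some (UNIV - (\<Union>n. basic_open (p n)))"

definition delta_two :: "baire \<Rightarrow> nat option" where
  "delta_two p = (if p 0 \<le> 1 then Some (p 0) else None)"

definition delta_sierp :: "baire \<Rightarrow> nat option" where
  "delta_sierp p = Some (if p = (\<lambda>_. 0) then 0 else 1)"

text \<open>Completion: None plays the role of bottom.  p - 1 is infinite iff p has infinitely many
  nonzero entries; then (p - 1)(k) = p(n_k) - 1 with n_k the k-th index where p is nonzero.\<close>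

definition minus_one :: "baire \<Rightarrow> baire" where
  "minus_one p = (\<lambda>k. p (enumerate {n. 0 < p n} k) - 1)"

definition completion :: "(baire \<Rightarrow> 'a option) \<Rightarrow> baire \<Rightarrow> 'a option option" where
  "completion d p = (if infinite {n. 0 < p n}
      then (case d (minus_one p) of None \<Rightarrow> Some None | Some x \<Rightarrow> Some (Some x))
      else Some None)"

definition pcompletion :: "('a \<Rightarrow> 'b set) \<Rightarrow> 'a option \<Rightarrow> 'b option set" where
  "pcompletion f x = (case x of Some a \<Rightarrow> (if f a \<noteq> {} then Some ` f a else UNIV) | None \<Rightarrow> UNIV)"

definition totalization :: "('a \<Rightarrow> 'b set) \<Rightarrow> 'a \<Rightarrow> 'b set" where
  "totalization f x = (if f x \<noteq> {} then f x else UNIV)"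

definition C_baire :: "baire set \<Rightarrow> baire set" where
  "C_baire A = (if A \<noteq> {} then A else {})"

definition WFT :: "baire set \<Rightarrow> nat set" where
  "WFT A = {if A = {} then 1 else 0}"

text \<open>WFT_S is the same map, but with target Sierpinski space (delta_sierp).\<close>

end

theory Submission
  imports Defs
begin


definition agr :: "nat \<Rightarrow> baire \<Rightarrow> baire \<Rightarrow> bool" where
  "agr N p p' \<longleftrightarrow> (\<forall>i<N. p' i = p i)"

lemma agr_mono: "agr N' p p' \<Longrightarrow> N \<le> N' \<Longrightarrow> agr N p p'"
  unfolding agr_def by auto

lemma agr_refl[simp]: "agr N p p" unfolding agr_def by auto

lemma list_all2_det:
  "list_all2 (\<lambda>g y. \<forall>y'. P g y' \<longrightarrow> y = y') gs ys \<Longrightarrow> list_all2 P gs ys' \<Longrightarrow> ys = ys'"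
proof (induction arbitrary: ys' rule: list_all2_induct)
  case Nil then show ?case by simp
next
  case (Cons x xs y ys)
  then show ?case by (cases ys') auto
qed

lemma ev_det: "ev p e xs y \<Longrightarrow> ev p e xs y' \<Longrightarrow> y = y'"
proof (induction arbitrary: y' rule: ev.induct)
  case (ev_Zr xs) from ev_Zr.prems show ?case by (cases rule: ev.cases) auto
next
  case (ev_Sc x xs) from ev_Sc.prems show ?case by (cases rule: ev.cases) auto
next
  case (ev_Proj i xs) from ev_Proj.prems show ?case by (cases rule: ev.cases) auto
next
  case (ev_Comp xs gs ys f z)
  from ev_Comp.prems obtain ys' where a: "list_all2 (\<lambda>g. ev p g xs) gs ys'" and b: "ev p f ys' y'"
    by (cases rule: ev.cases) auto
  have "list_all2 (\<lambda>g y. \<forall>y'. ev p g xs y' \<longrightarrow> y = y') gs ys"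
    using ev_Comp.IH(1) by (rule list_all2_mono) auto
  then have "ys = ys'" using a by (rule list_all2_det)
  then show ?case using ev_Comp.IH(2) b by simp
next
  case (ev_Prim0 f xs z g)
  from ev_Prim0.prems have "ev p f xs y'" by (cases rule: ev.cases) auto
  then show ?case using ev_Prim0.IH by simp
next
  case (ev_PrimS f g n xs r z)
  from ev_PrimS.prems obtain r' where a: "ev p (Prim f g) (n # xs) r'" and b: "ev p g (r' # n # xs) y'"
    by (cases rule: ev.cases) auto
  have "r = r'" using ev_PrimS.IH(1) a by simp
  then show ?case using ev_PrimS.IH(2) b by simp
next
  case (ev_Mn f n xs)
  from ev_Mn.prems have a: "ev p f (y' # xs) 0" and b: "\<forall>m<y'. \<exists>y>0. ev p f (m # xs) y"
    by (cases rule: ev.cases, auto)+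
  have IH1: "\<And>y'. ev p f (n # xs) y' \<Longrightarrow> 0 = y'" using ev_Mn.IH(1) by simp
  have IH2: "\<forall>m<n. \<exists>y>0. ev p f (m # xs) y \<and> (\<forall>y'. ev p f (m # xs) y' \<longrightarrow> y = y')"
    using ev_Mn.IH(2) by simp
  show ?case
  proof (rule ccontr)
    assume "n \<noteq> y'"
    then consider "n < y'" | "y' < n" by arith
    then show False
    proof cases
      case 1
      then obtain y where "y > 0" "ev p f (n # xs) y" using b by auto
      then show False using IH1 by fastforce
    next
      case 2
      then obtain y where "y > 0" "\<forall>y''. ev p f (y' # xs) y'' \<longrightarrow> y = y''"
        using IH2 by blast
      then show False using a by fastforce
    qed
  qed
next
  case (ev_Orc x xs) from ev_Orc.prems show ?case by (cases rule: ev.cases) auto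
qed

lemma list_all2_cont:
  "list_all2 (\<lambda>g y. \<exists>N. \<forall>p'. agr N p p' \<longrightarrow> P p' g y) gs ys \<Longrightarrow>
   \<exists>N. \<forall>p'. agr N p p' \<longrightarrow> list_all2 (\<lambda>g y. P p' g y) gs ys"
proof (induction rule: list_all2_induct)
  case Nil then show ?case by auto
next
  case (Cons x xs y ys)
  then obtain N1 N2 where N1: "\<forall>p'. agr N1 p p' \<longrightarrow> P p' x y" and N2: "\<forall>p'. agr N2 p p' \<longrightarrow> list_all2 (P p') xs ys"
    by blast
  show ?case
  proof (intro exI[of _ "max N1 N2"] allI impI)
    fix p' assume "agr (max N1 N2) p p'"
    then have "agr N1 p p'" "agr N2 p p'" using agr_mono by (simp_all add: agr_def)
    then show "list_all2 (P p') (x # xs) (y # ys)" using N1 N2 by simp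
  qed
qed

lemma finite_choice_N:
  "\<forall>m<(n::nat). \<exists>N. \<forall>p'. agr N p p' \<longrightarrow> P m p' \<Longrightarrow> \<exists>N. \<forall>p'. agr N p p' \<longrightarrow> (\<forall>m<n. P m p')"
proof (induction n)
  case 0 then show ?case by auto
next
  case (Suc n)
  then obtain N1 where N1: "\<forall>p'. agr N1 p p' \<longrightarrow> (\<forall>m<n. P m p')" by auto
  from Suc.prems obtain N2 where N2: "\<forall>p'. agr N2 p p' \<longrightarrow> P n p'" by auto
  have "\<forall>p'. agr (max N1 N2) p p' \<longrightarrow> (\<forall>m<Suc n. P m p')"
  proof (intro allI impI)
    fix p' m assume a: "agr (max N1 N2) p p'" and m: "m < Suc n"
    then have "agr N1 p p'" "agr N2 p p'" by (auto intro: agr_mono)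
    then show "P m p'" using N1 N2 m less_Suc_eq by auto
  qed
  then show ?case by blast
qed

lemma ev_cont: "ev p e xs y \<Longrightarrow> \<exists>N. \<forall>p'. agr N p p' \<longrightarrow> ev p' e xs y"
proof (induction rule: ev.induct)
  case (ev_Zr xs) then show ?case by (auto intro: ev.intros)
next
  case (ev_Sc x xs) then show ?case by (auto intro: ev.intros)
next
  case (ev_Proj i xs) then show ?case by (auto intro: ev.intros)
next
  case (ev_Comp xs gs ys f z)
  have "list_all2 (\<lambda>g y. \<exists>N. \<forall>p'. agr N p p' \<longrightarrow> ev p' g xs y) gs ys"
    using ev_Comp.IH(1) by (rule list_all2_mono) auto
  from list_all2_cont[OF this] obtain N1 where N1: "\<forall>p'. agr N1 p p' \<longrightarrow> list_all2 (\<lambda>g y. ev p' g xs y) gs ys"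
    by blast
  from ev_Comp.IH(2) obtain N2 where N2: "\<forall>p'. agr N2 p p' \<longrightarrow> ev p' f ys z" by blast
  have "\<forall>p'. agr (max N1 N2) p p' \<longrightarrow> ev p' (Comp f gs) xs z"
  proof (intro allI impI)
    fix p' assume a: "agr (max N1 N2) p p'"
    then have "agr N1 p p'" "agr N2 p p'" by (auto intro: agr_mono)
    then show "ev p' (Comp f gs) xs z" using N1 N2 by (auto intro: ev.ev_Comp)
  qed
  then show ?case by blast
next
  case (ev_Prim0 f xs z g)
  then show ?case by (auto intro: ev.intros)
next
  case (ev_PrimS f g n xs r z)
  then obtain N1 N2 where "\<forall>p'. agr N1 p p' \<longrightarrow> ev p' (Prim f g) (n # xs) r" "\<forall>p'. agr N2 p p' \<longrightarrow> ev p' g (r # n # xs) z"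
    by blast
  then have "\<forall>p'. agr (max N1 N2) p p' \<longrightarrow> ev p' (Prim f g) (Suc n # xs) z"
    using agr_mono[of "max N1 N2" p _ N1] agr_mono[of "max N1 N2" p _ N2] by (metis max.cobounded1 max.cobounded2 ev.ev_PrimS)
  then show ?case by blast
next
  case (ev_Mn f n xs)
  from ev_Mn.IH(1) obtain N1 where N1: "\<forall>p'. agr N1 p p' \<longrightarrow> ev p' f (n # xs) 0" by blast
  have "\<forall>m<n. \<exists>N. \<forall>p'. agr N p p' \<longrightarrow> (\<exists>y>0. ev p' f (m # xs) y)"
  proof (intro allI impI)
    fix m assume "m < n"
    then obtain y where "y > 0" "\<exists>N. \<forall>p'. agr N p p' \<longrightarrow> ev p' f (m # xs) y"
      using ev_Mn.IH(2) by blast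
    then show "\<exists>N. \<forall>p'. agr N p p' \<longrightarrow> (\<exists>y>0. ev p' f (m # xs) y)" by blast
  qed
  from finite_choice_N[OF this] obtain N2 where N2: "\<forall>p'. agr N2 p p' \<longrightarrow> (\<forall>m<n. \<exists>y>0. ev p' f (m # xs) y)"
    by blast
  have "\<forall>p'. agr (max N1 N2) p p' \<longrightarrow> ev p' (Mn f) xs n"
  proof (intro allI impI)
    fix p' assume a: "agr (max N1 N2) p p'"
    then have "agr N1 p p'" "agr N2 p p'" by (auto intro: agr_mono)
    then show "ev p' (Mn f) xs n" using N1 N2 by (auto intro: ev.ev_Mn)
  qed
  then show ?case by blast
next
  case (ev_Orc x xs)
  show ?case
  proof (intro exI[of _ "Suc x"] allI impI)
    fix p' assume "agr (Suc x) p p'"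
    then have "p' x = p x" unfolding agr_def by auto
    then show "ev p' Orc (x # xs) (p x)" using ev.ev_Orc[of p' x xs] by simp
  qed
qed


definition computes :: "baire \<Rightarrow> nat \<Rightarrow> recf \<Rightarrow> (nat list \<Rightarrow> nat) \<Rightarrow> bool" where
  "computes q k e F \<longleftrightarrow> (\<forall>xs. length xs = k \<longrightarrow> ev q e xs (F xs))"

fun prec :: "(nat list \<Rightarrow> nat) \<Rightarrow> (nat list \<Rightarrow> nat) \<Rightarrow> nat \<Rightarrow> nat list \<Rightarrow> nat" where
  "prec F G 0 ys = F ys"
| "prec F G (Suc n) ys = G (prec F G n ys # n # ys)"

lemma computes_cong: "computes q k e F \<Longrightarrow> (\<And>xs. length xs = k \<Longrightarrow> F xs = F' xs) \<Longrightarrow> computes q k e F'"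
  unfolding computes_def by auto

lemma c_Zr: "computes q k Zr (\<lambda>_. 0)"
  unfolding computes_def by (auto intro: ev.intros)

lemma c_Sc: "0 < k \<Longrightarrow> computes q k Sc (\<lambda>xs. Suc (hd xs))"
  unfolding computes_def
proof (intro allI impI)
  fix xs :: "nat list" assume "0 < k" "length xs = k"
  then obtain a ys where "xs = a # ys" by (cases xs) auto
  then show "ev q Sc xs (Suc (hd xs))" by (auto intro: ev.intros)
qed

lemma c_Orc: "0 < k \<Longrightarrow> computes q k Orc (\<lambda>xs. q (hd xs))"
  unfolding computes_def
proof (intro allI impI)
  fix xs :: "nat list" assume "0 < k" "length xs = k"
  then obtain a ys where "xs = a # ys" by (cases xs) auto
  then show "ev q Orc xs (q (hd xs))" by (auto intro: ev.intros)
qed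

lemma c_Proj: "i < k \<Longrightarrow> computes q k (Proj i) (\<lambda>xs. xs ! i)"
  unfolding computes_def by (auto intro: ev.intros)

lemma c_Comp1: "computes q 1 f F \<Longrightarrow> computes q k g G \<Longrightarrow> computes q k (Comp f [g]) (\<lambda>xs. F [G xs])"
  unfolding computes_def by (auto intro!: ev.ev_Comp[where ys="[_]"])

lemma c_Comp2: "computes q 2 f F \<Longrightarrow> computes q k g1 G1 \<Longrightarrow> computes q k g2 G2 \<Longrightarrow>
   computes q k (Comp f [g1, g2]) (\<lambda>xs. F [G1 xs, G2 xs])"
  unfolding computes_def by (auto intro!: ev.ev_Comp[where ys="[_, _]"])

lemma c_Comp3: "computes q 3 f F \<Longrightarrow> computes q k g1 G1 \<Longrightarrow> computes q k g2 G2 \<Longrightarrow> computes q k g3 G3 \<Longrightarrow>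
   computes q k (Comp f [g1, g2, g3]) (\<lambda>xs. F [G1 xs, G2 xs, G3 xs])"
  unfolding computes_def by (auto intro!: ev.ev_Comp[where ys="[_, _, _]"])

lemma c_Prim: "computes q k f F \<Longrightarrow> computes q (Suc (Suc k)) g G \<Longrightarrow>
   computes q (Suc k) (Prim f g) (\<lambda>xs. prec F G (hd xs) (tl xs))"
  unfolding computes_def
proof (intro allI impI)
  fix xs :: "nat list"
  assume f: "\<forall>xs. length xs = k \<longrightarrow> ev q f xs (F xs)"
    and g: "\<forall>xs. length xs = Suc (Suc k) \<longrightarrow> ev q g xs (G xs)" and l: "length xs = Suc k"
  then obtain a ys where xs: "xs = a # ys" and ly: "length ys = k" by (cases xs) auto
  have "ev q (Prim f g) (n # ys) (prec F G n ys)" for n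
  proof (induction n)
    case 0 then show ?case using f ly by (auto intro: ev.intros)
  next
    case (Suc n) then show ?case using g ly by (auto intro: ev.intros)
  qed
  then show "ev q (Prim f g) xs (prec F G (hd xs) (tl xs))" using xs by simp
qed

lemma len2: "length xs = 2 \<Longrightarrow> xs = [xs!0, xs!1]"
  by (cases xs; cases "tl xs") auto
lemma len1: "length xs = 1 \<Longrightarrow> xs = [xs!0]"
  by (cases xs) auto
lemma len3: "length xs = 3 \<Longrightarrow> xs = [xs!0, xs!1, xs!2]"
  by (cases xs; cases "tl xs"; cases "tl (tl xs)") auto

lemma c_Prim1: "computes q 0 f F \<Longrightarrow> computes q 2 g G \<Longrightarrow> computes q 1 (Prim f g) (\<lambda>xs. prec F G (hd xs) (tl xs))"
  using c_Prim[of q 0 f F g G] by (simp add: numeral_2_eq_2)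
lemma c_Prim2: "computes q 1 f F \<Longrightarrow> computes q 3 g G \<Longrightarrow> computes q 2 (Prim f g) (\<lambda>xs. prec F G (hd xs) (tl xs))"
  using c_Prim[of q 1 f F g G] by (simp add: numeral_2_eq_2 numeral_3_eq_3)
lemma c_Prim3: "computes q 2 f F \<Longrightarrow> computes q 4 g G \<Longrightarrow> computes q 3 (Prim f g) (\<lambda>xs. prec F G (hd xs) (tl xs))"
  using c_Prim[of q 2 f F g G] by (simp add: numeral_2_eq_2 numeral_3_eq_3 numeral_eq_Suc)

lemma ex1: "length xs = Suc 0 \<Longrightarrow> \<exists>a. xs = [a]"
  by (cases xs) auto
lemma ex2: "length xs = 2 \<Longrightarrow> \<exists>a b. xs = [a, b]"
  by (cases xs; cases "tl xs") auto
lemma ex3: "length xs = 3 \<Longrightarrow> \<exists>a b c. xs = [a, b, c]"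
  by (cases xs; cases "tl xs"; cases "tl (tl xs)") auto

definition "addP = Prim (Proj 0) (Comp Sc [Proj 0])"
lemma c_addP: "computes q 2 addP (\<lambda>xs. xs!0 + xs!1)"
  unfolding addP_def
  apply (rule computes_cong)
   apply (rule c_Prim2)
    apply (rule c_Proj, simp)
   apply (rule c_Comp1, rule c_Sc, simp, rule c_Proj, simp)
  apply (drule ex2, elim exE)
  subgoal for xs a b by (hypsubst_thin, simp, induct a, auto)
  done

definition "predP = Prim Zr (Proj 1)"
lemma c_predP: "computes q 1 predP (\<lambda>xs. xs!0 - 1)"
  unfolding predP_def
  apply (rule computes_cong)
   apply ((rule c_Comp1 c_Comp2 c_Comp3 c_Prim1 c_Prim2 c_Prim3 c_Sc c_Orc c_Zr c_Proj)+ | simp)+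
  apply (drule ex1, elim exE)
  subgoal for xs a by (hypsubst_thin, simp, cases a, auto)
  done

definition "subP = Prim (Proj 0) (Comp predP [Proj 0])"
lemma c_subP: "computes q 2 subP (\<lambda>xs. xs!1 - xs!0)"
  unfolding subP_def
  apply (rule computes_cong)
   apply ((rule c_Comp1 c_Comp2 c_Comp3 c_Prim1 c_Prim2 c_Prim3 c_Sc c_Orc c_Zr c_Proj c_predP)+ | simp)+
  apply (drule ex2, elim exE)
  subgoal for xs a b by (hypsubst_thin, simp, induct a, auto)
  done

definition "condP = Prim (Proj 0) (Proj 3)"
lemma c_condP: "computes q 3 condP (\<lambda>xs. if xs!0 = 0 then xs!1 else xs!2)"
  unfolding condP_def
  apply (rule computes_cong)
   apply ((rule c_Comp1 c_Comp2 c_Comp3 c_Prim1 c_Prim2 c_Prim3 c_Sc c_Orc c_Zr c_Proj)+ | simp)+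
  apply (drule ex3, elim exE)
  subgoal for xs a b c by (hypsubst_thin, simp, cases a, auto)
  done

definition "sgP = Prim Zr (Comp Sc [Zr])"
lemma c_sgP: "computes q 1 sgP (\<lambda>xs. if xs!0 = 0 then 0 else 1)"
  unfolding sgP_def
  apply (rule computes_cong)
   apply ((rule c_Comp1 c_Comp2 c_Comp3 c_Prim1 c_Prim2 c_Prim3 c_Sc c_Orc c_Zr c_Proj)+ | simp)+
  apply (drule ex1, elim exE)
  subgoal for xs a by (hypsubst_thin, simp, cases a, auto)
  done

definition "eqtP = Comp sgP [Comp addP [Comp subP [Proj 1, Proj 0], Comp subP [Proj 0, Proj 1]]]"
lemma c_eqtP: "computes q 2 eqtP (\<lambda>xs. if xs!0 = xs!1 then 0 else 1)"
  unfolding eqtP_def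
  apply (rule computes_cong)
   apply ((rule c_Comp1 c_Comp2 c_Comp3 c_Prim1 c_Prim2 c_Prim3 c_Sc c_Orc c_Zr c_Proj c_sgP c_addP c_subP)+ | simp)+
  done

definition "triP = Prim Zr (Comp Sc [Comp addP [Proj 0, Proj 1]])"
lemma c_triP: "computes q 1 triP (\<lambda>xs. triangle (xs!0))"
  unfolding triP_def
  apply (rule computes_cong)
   apply ((rule c_Comp1 c_Comp2 c_Comp3 c_Prim1 c_Prim2 c_Prim3 c_Sc c_Orc c_Zr c_Proj c_addP)+ | simp)+
  apply (drule ex1, elim exE)
  subgoal for xs a by (hypsubst_thin, simp, induct a, auto)
  done

definition "peP = Comp addP [Comp triP [addP], Proj 0]"
lemma c_peP: "computes q 2 peP (\<lambda>xs. prod_encode (xs!0, xs!1))"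
  unfolding peP_def
  apply (rule computes_cong)
   apply ((rule c_Comp1 c_Comp2 c_Comp3 c_Prim1 c_Prim2 c_Prim3 c_Sc c_Orc c_Zr c_Proj c_addP c_triP)+ | simp)+
  apply (simp add: prod_encode_def)
  done

definition "dblP = Comp addP [Proj 0, Proj 0]"
lemma c_dblP: "computes q 1 dblP (\<lambda>xs. xs!0 + xs!0)"
  unfolding dblP_def
  apply (rule computes_cong)
   apply ((rule c_Comp1 c_Comp2 c_Comp3 c_Prim1 c_Prim2 c_Prim3 c_Sc c_Orc c_Zr c_Proj c_addP)+ | simp)+
  done

definition "roddP = Comp Orc [Comp Sc [dblP]]"
lemma c_roddP: "computes q 1 roddP (\<lambda>xs. q (Suc (xs!0 + xs!0)))"
  unfolding roddP_def
  apply (rule computes_cong)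
   apply ((rule c_Comp1 c_Comp2 c_Comp3 c_Prim1 c_Prim2 c_Prim3 c_Sc c_Orc c_Zr c_Proj c_dblP)+ | simp)+
  done

definition "revenP = Comp Orc [dblP]"
lemma c_revenP: "computes q 1 revenP (\<lambda>xs. q (xs!0 + xs!0))"
  unfolding revenP_def
  apply (rule computes_cong)
   apply ((rule c_Comp1 c_Comp2 c_Comp3 c_Prim1 c_Prim2 c_Prim3 c_Sc c_Orc c_Zr c_Proj c_dblP)+ | simp)+
  done

fun ffun :: "baire \<Rightarrow> nat \<Rightarrow> nat \<Rightarrow> nat" where
  "ffun q 0 L = 0"
| "ffun q (Suc j) L = Suc (prod_encode (q (Suc ((L - Suc j) + (L - Suc j))), ffun q j L))"
fun befun :: "baire \<Rightarrow> nat \<Rightarrow> nat \<Rightarrow> nat" where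
  "befun q 0 m = 0"
| "befun q (Suc t) m = (if ffun q t t = m then 1 else befun q t m)"
definition memfun :: "baire \<Rightarrow> nat \<Rightarrow> nat" where
  "memfun q c = (if c = 0 then 0 else befun q c (c - 1))"
fun b2fun :: "baire \<Rightarrow> nat \<Rightarrow> nat" where
  "b2fun q 0 = 0"
| "b2fun q (Suc t) = (if memfun q (q (t + t)) = 0 then b2fun q t else 1)"

definition "FP = Prim Zr (Comp Sc [Comp peP [Comp roddP [Comp subP [Comp Sc [Proj 1], Proj 2]], Proj 0]])"
lemma c_FP: "computes q 2 FP (\<lambda>xs. ffun q (xs!0) (xs!1))"
  unfolding FP_def
  apply (rule computes_cong)
   apply ((rule c_Comp1 c_Comp2 c_Comp3 c_Prim1 c_Prim2 c_Prim3 c_Sc c_Orc c_Zr c_Proj c_addP c_predP c_subP c_condP c_sgP c_eqtP c_triP c_peP c_dblP c_roddP c_revenP )+ | simp)+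
  apply (drule ex2, elim exE)
  subgoal for xs a b by (hypsubst_thin, simp, induct a, auto)
  done

definition "EP = Comp FP [Proj 0, Proj 0]"
lemma c_EP: "computes q 1 EP (\<lambda>xs. ffun q (xs!0) (xs!0))"
  unfolding EP_def
  apply (rule computes_cong)
   apply ((rule c_Comp1 c_Comp2 c_Comp3 c_Prim1 c_Prim2 c_Prim3 c_Sc c_Orc c_Zr c_Proj c_addP c_predP c_subP c_condP c_sgP c_eqtP c_triP c_peP c_dblP c_roddP c_revenP c_FP)+ | simp)+
  
  done

definition "BEP = Prim Zr (Comp condP [Comp eqtP [Comp EP [Proj 1], Proj 2], Comp Sc [Zr], Proj 0])"
lemma c_BEP: "computes q 2 BEP (\<lambda>xs. befun q (xs!0) (xs!1))"
  unfolding BEP_def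
  apply (rule computes_cong)
   apply ((rule c_Comp1 c_Comp2 c_Comp3 c_Prim1 c_Prim2 c_Prim3 c_Sc c_Orc c_Zr c_Proj c_addP c_predP c_subP c_condP c_sgP c_eqtP c_triP c_peP c_dblP c_roddP c_revenP c_EP)+ | simp)+
  apply (drule ex2, elim exE)
  subgoal for xs a b by (hypsubst_thin, simp, induct a, auto)
  done

definition "memP = Comp condP [Proj 0, Zr, Comp BEP [Proj 0, Comp predP [Proj 0]]]"
lemma c_memP: "computes q 1 memP (\<lambda>xs. memfun q (xs!0))"
  unfolding memP_def
  apply (rule computes_cong)
   apply ((rule c_Comp1 c_Comp2 c_Comp3 c_Prim1 c_Prim2 c_Prim3 c_Sc c_Orc c_Zr c_Proj c_addP c_predP c_subP c_condP c_sgP c_eqtP c_triP c_peP c_dblP c_roddP c_revenP c_BEP)+ | simp)+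
  apply (auto simp: memfun_def)
  done

definition "B2P = Prim Zr (Comp condP [Comp memP [Comp revenP [Proj 1]], Proj 0, Comp Sc [Zr]])"
lemma c_B2P: "computes q 1 B2P (\<lambda>xs. b2fun q (xs!0))"
  unfolding B2P_def
  apply (rule computes_cong)
   apply ((rule c_Comp1 c_Comp2 c_Comp3 c_Prim1 c_Prim2 c_Prim3 c_Sc c_Orc c_Zr c_Proj c_addP c_predP c_subP c_condP c_sgP c_eqtP c_triP c_peP c_dblP c_roddP c_revenP c_memP)+ | simp)+
  apply (drule ex1, elim exE)
  subgoal for xs a by (hypsubst_thin, simp, induct a, auto)
  done

definition "H1P = Comp B2P [Comp Sc [Proj 0]]"
lemma c_H1P: "computes q 1 H1P (\<lambda>xs. b2fun q (Suc (xs!0)))"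
  unfolding H1P_def
  apply (rule computes_cong)
   apply ((rule c_Comp1 c_Comp2 c_Comp3 c_Prim1 c_Prim2 c_Prim3 c_Sc c_Orc c_Zr c_Proj c_addP c_predP c_subP c_condP c_sgP c_eqtP c_triP c_peP c_dblP c_roddP c_revenP c_B2P)+ | simp)+
  
  done

definition "KdP = Comp condP [Orc, Comp Sc [Comp Sc [Comp peP [Sc, Zr]]], Comp Sc [Comp Sc [Zr]]]"
lemma c_KdP: "computes q 1 KdP (\<lambda>xs. if q (xs!0) = 0 then Suc (Suc (prod_encode (Suc (xs!0), 0))) else 2)"
  unfolding KdP_def
  apply (rule computes_cong)
   apply ((rule c_Comp1 c_Comp2 c_Comp3 c_Prim1 c_Prim2 c_Prim3 c_Sc c_Orc c_Zr c_Proj c_addP c_predP c_subP c_condP c_sgP c_eqtP c_triP c_peP c_dblP c_roddP c_revenP )+ | simp)+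
  
  apply (drule ex1, elim exE)
  subgoal for xs a by (hypsubst_thin, simp)
  done

definition "HdP = Comp sgP [Comp Orc [Comp Sc [Zr]]]"
lemma c_HdP: "computes q 1 HdP (\<lambda>xs. if q 1 = 0 then 0 else 1)"
  unfolding HdP_def
  apply (rule computes_cong)
   apply ((rule c_Comp1 c_Comp2 c_Comp3 c_Prim1 c_Prim2 c_Prim3 c_Sc c_Orc c_Zr c_Proj c_addP c_predP c_subP c_condP c_sgP c_eqtP c_triP c_peP c_dblP c_roddP c_revenP )+ | simp)+
  
  done


definition oddseq :: "baire \<Rightarrow> baire" where "oddseq q = (\<lambda>i. q (Suc (i + i)))"

definition Aset :: "baire \<Rightarrow> baire set" where "Aset p = UNIV - (\<Union>n. basic_open (p n))"

lemma delta_closed_Aset: "delta_closed p = Some (Aset p)"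
  unfolding delta_closed_def Aset_def by simp

lemma ffun_eq: "j \<le> L \<Longrightarrow> ffun q j L = list_encode (map (oddseq q) [L-j..<L])"
proof (induction j)
  case 0 then show ?case by simp
next
  case (Suc j)
  have "[L - Suc j..<L] = (L - Suc j) # [L - j..<L]"
    using Suc.prems upt_conv_Cons[of "L - Suc j" L] by (simp add: Suc_diff_Suc)
  then show ?case using Suc by (simp add: oddseq_def)
qed

lemma befun_eq: "befun q t m = (if \<exists>L<t. list_encode (map (oddseq q) [0..<L]) = m then 1 else 0)"
proof (induction t)
  case 0 then show ?case by simp
next
  case (Suc t) then show ?case using ffun_eq[of t t q] by (auto simp: less_Suc_eq)
qed

lemma len_le_encode: "length xs \<le> list_encode xs"
proof (induction xs)
  case Nil then show ?case by simp
next
  case (Cons x xs) then show ?case using le_prod_encode_2[of "list_encode xs" x] by simp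
qed

lemma map_upt_eq: "map x [0..<length l] = l \<longleftrightarrow> (\<forall>i<length l. x i = l ! i)"
proof
  assume "map x [0..<length l] = l"
  then show "\<forall>i<length l. x i = l ! i" by (metis add_0 diff_zero length_upt nth_map nth_upt)
next
  assume "\<forall>i<length l. x i = l ! i"
  then show "map x [0..<length l] = l" by (intro nth_equalityI) auto
qed

lemma basic_open_Suc: "x \<in> basic_open (Suc m) \<longleftrightarrow> map x [0..<length (list_decode m)] = list_decode m"
proof -
  have "x \<in> basic_open (Suc m) \<longleftrightarrow> (\<forall>i<length (list_decode m). x i = list_decode m ! i)"
    by (simp add: basic_open_def)
  also have "\<dots> \<longleftrightarrow> map x [0..<length (list_decode m)] = list_decode m"
    by (rule map_upt_eq[symmetric])
  finally show ?thesis .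
qed

lemma basic_open_0[simp]: "basic_open 0 = {}"
  unfolding basic_open_def by simp

lemma memfun_eq: "memfun q c = (if oddseq q \<in> basic_open c then 1 else 0)"
proof (cases c)
  case 0 then show ?thesis by (simp add: memfun_def)
next
  case (Suc m)
  have "(\<exists>L<Suc m. list_encode (map (oddseq q) [0..<L]) = m) \<longleftrightarrow> oddseq q \<in> basic_open (Suc m)"
  proof
    assume "\<exists>L<Suc m. list_encode (map (oddseq q) [0..<L]) = m"
    then obtain L where "list_encode (map (oddseq q) [0..<L]) = m" by blast
    then have "list_decode m = map (oddseq q) [0..<L]" using list_encode_inverse by metis
    then show "oddseq q \<in> basic_open (Suc m)" unfolding basic_open_Suc by simp
  next
    assume "oddseq q \<in> basic_open (Suc m)"
    then have e: "map (oddseq q) [0..<length (list_decode m)] = list_decode m" unfolding basic_open_Suc .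
    have "length (list_decode m) \<le> m" using len_le_encode[of "list_decode m"] by simp
    moreover have "list_encode (map (oddseq q) [0..<length (list_decode m)]) = m" using e by simp
    ultimately show "\<exists>L<Suc m. list_encode (map (oddseq q) [0..<L]) = m" by (intro exI[of _ "length (list_decode m)"]) auto
  qed
  then show ?thesis using Suc by (simp add: memfun_def befun_eq)
qed

lemma b2fun_eq: "b2fun q (Suc n) = (if \<exists>m\<le>n. oddseq q \<in> basic_open (q (m + m)) then 1 else 0)"
proof (induction n)
  case 0 then show ?case by (simp add: memfun_eq)
next
  case (Suc n) then show ?case by (auto simp: memfun_eq le_Suc_eq)
qed

lemma pair_even[simp]: "pair p r (m + m) = p m" unfolding pair_def by simp
lemma pair_odd[simp]: "pair p r (Suc (m + m)) = r m" unfolding pair_def by simp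
lemma pair_1[simp]: "pair p r (Suc 0) = r 0" unfolding pair_def by simp
lemma oddseq_pair[simp]: "oddseq (pair p r) = r" unfolding oddseq_def by simp

lemma computable_of: "(\<And>q. computes q 1 e (\<lambda>xs. f q (xs!0))) \<Longrightarrow> computable (\<lambda>q. Some (f q))"
  unfolding computable_def computes_def
  apply (rule exI[of _ e])
  apply auto
  subgoal for p n
    apply (drule meta_spec[of _ p])
    apply (drule spec[of _ "[n]"])
    by simp
  done

lemma computable_id: "computable (\<lambda>q. Some q)"
proof -
  have "computes q 1 Orc (\<lambda>xs. q (xs!0))" for q
    by (rule computes_cong[OF c_Orc]) (auto dest!: ex1)
  then show ?thesis using computable_of[of Orc "\<lambda>q n. q n"] by simp
qed

definition H1 :: "baire \<Rightarrow> baire option" where "H1 q = Some (\<lambda>n. b2fun q (Suc n))"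

lemma computable_H1: "computable H1"
  unfolding H1_def by (rule computable_of[OF c_H1P])

lemma TC_mem: "r \<in> totalization C_baire A \<Longrightarrow> A \<noteq> {} \<Longrightarrow> r \<in> A"
  unfolding totalization_def C_baire_def by (auto split: if_splits)

lemma TC_nonempty[simp]: "totalization C_baire A \<noteq> {}"
  unfolding totalization_def C_baire_def by auto

lemma realizes_compI:
  assumes "\<And>p x. dX p = Some x \<Longrightarrow> f x \<noteq> {} \<Longrightarrow>
     \<exists>k r q y. K p = Some k \<and> G k = Some r \<and> H (pair p r) = Some q \<and> dY q = Some y \<and> y \<in> f x"
  shows "realizes dX dY f (\<lambda>p. case K p of None \<Rightarrow> None
                                 | Some k \<Rightarrow> (case G k of None \<Rightarrow> None
                                               | Some r \<Rightarrow> H (pair p r)))"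
  unfolding realizes_def using assms by fastforce

lemma realizes_compD:
  assumes "realizes dX dY f (\<lambda>p. case K p of None \<Rightarrow> None
                                 | Some k \<Rightarrow> (case G k of None \<Rightarrow> None
                                               | Some r \<Rightarrow> H (pair p r)))"
    and "dX p = Some x" "f x \<noteq> {}"
  shows "\<exists>k r q y. K p = Some k \<and> G k = Some r \<and> H (pair p r) = Some q \<and> dY q = Some y \<and> y \<in> f x"
proof -
  from assms obtain q y where a: "(case K p of None \<Rightarrow> None
                                 | Some k \<Rightarrow> (case G k of None \<Rightarrow> None
                                               | Some r \<Rightarrow> H (pair p r))) = Some q" "dY q = Some y" "y \<in> f x"
    unfolding realizes_def by blast
  then show ?thesis by (auto split: option.splits)
qed

lemma key1:
  assumes "r \<in> totalization C_baire (Aset p)"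
  shows "((\<lambda>n. b2fun (pair p r) (Suc n)) = (\<lambda>_. 0)) \<longleftrightarrow> Aset p \<noteq> {}"
proof -
  have b: "b2fun (pair p r) (Suc n) = (if \<exists>m\<le>n. r \<in> basic_open (p m) then 1 else 0)" for n
    using b2fun_eq[of "pair p r" n] by simp
  have "((\<lambda>n. b2fun (pair p r) (Suc n)) = (\<lambda>_. 0)) \<longleftrightarrow> (\<forall>n. \<not> (\<exists>m\<le>n. r \<in> basic_open (p m)))"
    unfolding fun_eq_iff b by auto
  also have "\<dots> \<longleftrightarrow> (\<forall>m. r \<notin> basic_open (p m))" by (meson order.refl)
  also have "\<dots> \<longleftrightarrow> r \<in> Aset p" unfolding Aset_def by auto
  also have "\<dots> \<longleftrightarrow> Aset p \<noteq> {}" using TC_mem[OF assms] by auto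
  finally show ?thesis .
qed

lemma part1a: "weihrauch_le delta_closed delta_sierp WFT delta_closed delta_baire (totalization C_baire)"
  unfolding weihrauch_le_def
  apply (rule exI[of _ H1], rule exI[of _ "\<lambda>p. Some p"])
  apply (intro conjI computable_H1 computable_id allI impI)
  apply (rule realizes_compI)
  subgoal for G p x
  proof -
    assume G: "realizes delta_closed delta_baire (totalization C_baire) G" and "delta_closed p = Some x"
    then have x: "x = Aset p" by (simp add: delta_closed_Aset)
    from G obtain r where Gp: "G p = Some r" and r: "r \<in> totalization C_baire (Aset p)"
      unfolding realizes_def delta_baire_def by (force simp: delta_closed_Aset)
    show ?thesis
      using key1[OF r] x Gp by (auto simp: H1_def delta_sierp_def WFT_def)
  qed
  done


definition h0 :: "baire \<Rightarrow> baire set" where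
  "h0 y = {q. q 0 = (if y = (\<lambda>_. 0) then 0 else 1)}"
definition g0 :: "baire \<Rightarrow> baire set" where
  "g0 p = {s. (s = (\<lambda>_. 0)) = (Aset p \<noteq> {})}"
definition Kd :: "baire \<Rightarrow> baire option" where
  "Kd y = Some (\<lambda>j. if y j = 0 then Suc (Suc (prod_encode (Suc j, 0))) else 2)"
definition Hd :: "baire \<Rightarrow> baire option" where
  "Hd q = Some (\<lambda>n. if q 1 = 0 then 0 else 1)"
definition Hodd :: "baire \<Rightarrow> baire option" where
  "Hodd q = Some (\<lambda>n. q (Suc (n + n)))"

lemma computable_Kd: "computable Kd"
  unfolding Kd_def by (rule computable_of[OF c_KdP])
lemma computable_Hd: "computable Hd"
  unfolding Hd_def by (rule computable_of[OF c_HdP])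
lemma computable_Hodd: "computable Hodd"
  unfolding Hodd_def by (rule computable_of[OF c_roddP])

lemma cyl1: "basic_open (Suc (Suc (prod_encode (a, 0)))) = {x. x 0 = a}"
proof -
  have "Suc (prod_encode (a, 0)) = list_encode [a]" by simp
  then have "list_decode (Suc (prod_encode (a, 0))) = [a]" by (metis list_encode_inverse)
  then show ?thesis unfolding basic_open_def by auto
qed

lemma cyl0: "basic_open 2 = {x. x 0 = 0}"
proof -
  have "prod_encode (0, 0) = 0" by (simp add: prod_encode_def)
  then have "(2::nat) = Suc (Suc (prod_encode (0, 0)))" by simp
  then show ?thesis using cyl1[of 0] by (simp add: numeral_2_eq_2)
qed

lemma Aset_Kd: "d \<in> Aset (\<lambda>j. if y j = 0 then Suc (Suc (prod_encode (Suc j, 0))) else 2) \<longleftrightarrow>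
   (\<forall>j. (y j = 0 \<longrightarrow> d 0 \<noteq> Suc j) \<and> (y j \<noteq> 0 \<longrightarrow> d 0 \<noteq> 0))"
  unfolding Aset_def by (auto simp: cyl1 cyl0 split: if_splits)

lemma h0_le: "weihrauch_le delta_baire delta_baire h0 delta_closed delta_baire C_baire"
  unfolding weihrauch_le_def
  apply (rule exI[of _ Hd], rule exI[of _ Kd])
  apply (intro conjI computable_Hd computable_Kd allI impI)
  apply (rule realizes_compI)
  subgoal for G y x
  proof -
    assume G: "realizes delta_closed delta_baire C_baire G" and "delta_baire y = Some x"
    then have x: "x = y" by (simp add: delta_baire_def)
    define k where "k = (\<lambda>j. if y j = 0 then Suc (Suc (prod_encode (Suc j, 0))) else 2)"
    have ne: "Aset k \<noteq> {}"
    proof (cases "y = (\<lambda>_. 0)")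
      case True
      then have "(\<lambda>_. 0) \<in> Aset k" unfolding k_def Aset_Kd by auto
      then show ?thesis by auto
    next
      case False
      then obtain i where "y i \<noteq> 0" by auto
      then have "(\<lambda>_. Suc i) \<in> Aset k" unfolding k_def Aset_Kd by auto
      then show ?thesis by auto
    qed
    from G have "\<forall>p x. delta_closed p = Some x \<and> C_baire x \<noteq> {} \<longrightarrow>
        (\<exists>q z. G p = Some q \<and> delta_baire q = Some z \<and> z \<in> C_baire x)"
      unfolding realizes_def .
    then have "delta_closed k = Some (Aset k) \<and> C_baire (Aset k) \<noteq> {} \<longrightarrow>
        (\<exists>q z. G k = Some q \<and> delta_baire q = Some z \<and> z \<in> C_baire (Aset k))" by blast
    then have "\<exists>d z. G k = Some d \<and> delta_baire d = Some z \<and> z \<in> C_baire (Aset k)"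
      using ne by (simp add: delta_closed_Aset C_baire_def)
    then obtain d where Gk: "G k = Some d" and d: "d \<in> Aset k"
      by (auto simp: delta_baire_def C_baire_def split: if_splits)
    have "(if d 0 = 0 then 0 else 1) = (if y = (\<lambda>_. 0) then 0 else (1::nat))"
    proof (cases "d 0")
      case 0
      then have "y = (\<lambda>_. 0)" using d unfolding k_def Aset_Kd by auto
      then show ?thesis using 0 by simp
    next
      case (Suc j)
      then have "y j \<noteq> 0" using d unfolding k_def Aset_Kd by auto
      then have "y \<noteq> (\<lambda>_. 0)" by auto
      then show ?thesis using Suc by simp
    qed
    then show ?thesis
      using Gk x by (auto simp: Kd_def k_def[symmetric] Hd_def delta_baire_def h0_def)
  qed
  done

lemma g0_le: "weihrauch_le delta_baire delta_baire g0 delta_closed delta_baire (totalization C_baire)"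
  unfolding weihrauch_le_def
  apply (rule exI[of _ H1], rule exI[of _ "\<lambda>p. Some p"])
  apply (intro conjI computable_H1 computable_id allI impI)
  apply (rule realizes_compI)
  subgoal for G p x
  proof -
    assume G: "realizes delta_closed delta_baire (totalization C_baire) G" and "delta_baire p = Some x"
    then have x: "x = p" by (simp add: delta_baire_def)
    from G obtain r where Gp: "G p = Some r" and r: "r \<in> totalization C_baire (Aset p)"
      unfolding realizes_def delta_baire_def by (force simp: delta_closed_Aset)
    show ?thesis
      using key1[OF r] x Gp by (auto simp: H1_def delta_baire_def g0_def)
  qed
  done

lemma pcomp_le: "weihrauch_le delta_closed delta_two WFT delta_baire delta_baire (pcomp h0 g0)"
  unfolding weihrauch_le_def
  apply (rule exI[of _ Hodd], rule exI[of _ "\<lambda>p. Some p"])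
  apply (intro conjI computable_Hodd computable_id allI impI)
  apply (rule realizes_compI)
  subgoal for G p x
  proof -
    assume G: "realizes delta_baire delta_baire (pcomp h0 g0) G" and "delta_closed p = Some x"
    then have x: "x = Aset p" by (simp add: delta_closed_Aset)
    define s0 :: baire where "s0 = (if Aset p \<noteq> {} then (\<lambda>_. 0) else (\<lambda>_. 1))"
    have s0: "s0 \<in> g0 p" unfolding g0_def s0_def by (auto simp: fun_eq_iff)
    have hne: "h0 s \<noteq> {}" for s
    proof -
      have "(\<lambda>_. if s = (\<lambda>_. 0) then 0 else 1) \<in> h0 s" unfolding h0_def by simp
      then show ?thesis by auto
    qed
    have ne: "pcomp h0 g0 p \<noteq> {}"
      unfolding pcomp_def using s0 hne by auto
    from G ne have "\<exists>q z. G p = Some q \<and> delta_baire q = Some z \<and> z \<in> pcomp h0 g0 p"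
      unfolding realizes_def delta_baire_def by simp
    then obtain q where Gp: "G p = Some q" and q: "q \<in> pcomp h0 g0 p"
      unfolding delta_baire_def by auto
    from q obtain s where s: "s \<in> g0 p" and qs: "q \<in> h0 s"
      unfolding pcomp_def by (auto split: if_splits)
    have q0: "q 0 = (if Aset p = {} then 1 else 0)" using s qs unfolding g0_def h0_def by auto
    have hq: "(\<lambda>n. pair p q (Suc (n + n))) = q" by simp
    show ?thesis
      using Gp q0 x hq by (auto simp: Hodd_def delta_two_def WFT_def)
  qed
  done

lemma part2a: "weihrauch_le_cprod delta_closed delta_two WFT
            delta_closed delta_baire C_baire
            delta_closed delta_baire (totalization C_baire)"
  unfolding weihrauch_le_cprod_def using h0_le g0_le pcomp_le by blast


primrec pref :: "(baire \<Rightarrow> nat \<Rightarrow> nat) \<Rightarrow> nat \<Rightarrow> nat list" where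
  "pref P 0 = []"
| "pref P (Suc s) = pref P s @ [P (\<lambda>i. if i < s then pref P s ! i else 0) s]"

lemma length_pref[simp]: "length (pref P s) = s"
  by (induction s) auto

lemma pref_nth: "i < s \<Longrightarrow> s \<le> t \<Longrightarrow> pref P t ! i = pref P s ! i"
proof (induction t)
  case 0 then show ?case by simp
next
  case (Suc t)
  show ?case
  proof (cases "s = Suc t")
    case True then show ?thesis by simp
  next
    case False
    then have "s \<le> t" using Suc.prems by simp
    then have "pref P t ! i = pref P s ! i" using Suc by simp
    moreover have "i < t" using Suc.prems \<open>s \<le> t\<close> by simp
    ultimately show ?thesis by (simp add: nth_append)
  qed
qed

lemma fixpoint:
  assumes dep: "\<And>p p' s. agr s p p' \<Longrightarrow> P p s = P p' s"
  shows "\<exists>p. \<forall>s. p s = P p s"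
proof -
  define p where "p = (\<lambda>i. pref P (Suc i) ! i)"
  have "p s = P p s" for s
  proof -
    define e where "e = (\<lambda>i. if i < s then pref P s ! i else 0)"
    have "p s = P e s" unfolding p_def e_def by (simp add: nth_append)
    moreover have "agr s e p" unfolding agr_def
    proof (intro allI impI)
      fix i assume "i < s"
      then have "pref P s ! i = pref P (Suc i) ! i" using pref_nth[of i "Suc i" s P] by simp
      then show "p i = e i" unfolding p_def e_def using \<open>i < s\<close> by simp
    qed
    ultimately show ?thesis using dep by metis
  qed
  then show ?thesis by blast
qed

definition prefix :: "baire \<Rightarrow> nat \<Rightarrow> nat list" where
  "prefix x n = map x [0..<n]"

lemma diag:
  assumes dep: "\<And>p p' \<sigma>. agr (length \<sigma>) p p' \<Longrightarrow> bad p \<sigma> = bad p' \<sigma>"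
  shows "\<exists>p. Aset p = {x. \<forall>n. \<not> bad p (prefix x n)}"
proof -
  define P where "P = (\<lambda>p s. if bad p (list_decode s) then Suc s else 0)"
  have "P p s = P p' s" if "agr s p p'" for p p' s
  proof -
    have "length (list_decode s) \<le> s" using len_le_encode[of "list_decode s"] by simp
    then have "agr (length (list_decode s)) p p'" using that agr_mono by blast
    then show ?thesis unfolding P_def using dep by simp
  qed
  then obtain p where p: "\<forall>s. p s = P p s" using fixpoint[of P] by blast
  have "x \<notin> Aset p \<longleftrightarrow> (\<exists>n. bad p (prefix x n))" for x
  proof
    assume "x \<notin> Aset p"
    then obtain s where "x \<in> basic_open (p s)" unfolding Aset_def by auto
    then have b: "bad p (list_decode s)" and "x \<in> basic_open (Suc s)" using p unfolding P_def
      by (auto split: if_splits)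
    then have "prefix x (length (list_decode s)) = list_decode s" unfolding prefix_def basic_open_Suc by simp
    then show "\<exists>n. bad p (prefix x n)" using b by metis
  next
    assume "\<exists>n. bad p (prefix x n)"
    then obtain n where b: "bad p (prefix x n)" by blast
    define s where "s = list_encode (prefix x n)"
    have ds: "list_decode s = prefix x n" unfolding s_def by simp
    have "x \<in> basic_open (Suc s)" unfolding basic_open_Suc ds prefix_def by simp
    moreover have "p s = Suc s" using p b ds unfolding P_def by simp
    ultimately have "x \<in> basic_open (p s)" by simp
    then show "x \<notin> Aset p" unfolding Aset_def by blast
  qed
  then have "Aset p = {x. \<forall>n. \<not> bad p (prefix x n)}" by blast
  then show ?thesis by blast
qed

lemma prefix_Suc2: "prefix x (Suc (Suc m)) = x 0 # x 1 # prefix (\<lambda>i. x (Suc (Suc i))) m"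
  unfolding prefix_def by (simp add: map_upt_Suc del: upt_Suc)

lemma prefix_Suc1: "prefix x (Suc m) = x 0 # prefix (\<lambda>i. x (Suc i)) m"
  unfolding prefix_def by (simp add: map_upt_Suc del: upt_Suc)

lemma length_prefix[simp]: "length (prefix x n) = n" unfolding prefix_def by simp
lemma nth_prefix[simp]: "i < n \<Longrightarrow> prefix x n ! i = x i" unfolding prefix_def by simp

lemma agr_sym: "agr L p p' \<Longrightarrow> agr L p' p" unfolding agr_def by auto
lemma agr_trans: "agr L p p' \<Longrightarrow> agr L p' p'' \<Longrightarrow> agr L p p''" unfolding agr_def by auto

lemma all_agr_dep: "agr L p p'' \<Longrightarrow> (\<forall>p'. agr L p p' \<longrightarrow> X p') = (\<forall>p'. agr L p'' p' \<longrightarrow> X p')"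
  using agr_sym agr_trans by blast

lemma agr_pair: "agr N p p' \<Longrightarrow> agr N r r' \<Longrightarrow> agr N (pair p r) (pair p' r')"
  unfolding agr_def pair_def by auto

lemma prefix_0[simp]: "prefix x 0 = []" unfolding prefix_def by simp
lemma prefix_1[simp]: "prefix x (Suc 0) = [x 0]" unfolding prefix_def by simp

lemma all_nat_SS: "(\<forall>n. P n) \<longleftrightarrow> P 0 \<and> P (Suc 0) \<and> (\<forall>m. P (Suc (Suc m)))"
  by (metis not0_implies_Suc)

lemma all_nat_Suc: "(\<forall>n. P n) \<longleftrightarrow> P 0 \<and> (\<forall>m. P (Suc m))"
  by (metis not0_implies_Suc)


lemma TC_some: "(SOME r. r \<in> totalization C_baire A) \<in> totalization C_baire A"
  using TC_nonempty[of A] by (metis ex_in_conv someI_ex)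

lemma TC_all: "A = {} \<Longrightarrow> r \<in> totalization C_baire A"
  unfolding totalization_def C_baire_def by auto
lemma TC_in: "r \<in> A \<Longrightarrow> r \<in> totalization C_baire A"
  unfolding totalization_def C_baire_def by auto

lemma realizes_TC: "realizes delta_closed delta_baire (totalization C_baire) G \<longleftrightarrow>
   (\<forall>k. \<exists>r. G k = Some r \<and> r \<in> totalization C_baire (Aset k))"
  unfolding realizes_def delta_closed_Aset delta_baire_def by auto

context
  fixes H K :: "baire \<Rightarrow> baire option" and eH eK :: recf
  assumes eK: "\<And>p k. K p = Some k \<Longrightarrow> \<forall>n. ev p eK [n] (k n)"
    and eH: "\<And>u q. H u = Some q \<Longrightarrow> \<forall>n. ev u eH [n] (q n)"
    and red: "\<And>G. realizes delta_closed delta_baire (totalization C_baire) G \<Longrightarrow>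
       realizes delta_closed delta_two WFT (\<lambda>p. case K p of None \<Rightarrow> None
                                 | Some k \<Rightarrow> (case G k of None \<Rightarrow> None
                                               | Some r \<Rightarrow> H (pair p r)))"
begin

lemma K_some: "\<exists>k. K p = Some k"
proof -
  define G :: "baire \<Rightarrow> baire option" where "G = (\<lambda>k. Some (SOME r. r \<in> totalization C_baire (Aset k)))"
  have "realizes delta_closed delta_baire (totalization C_baire) G"
    unfolding realizes_TC G_def using TC_some by auto
  from red[OF this] have "\<exists>q y. (case K p of None \<Rightarrow> None | Some k \<Rightarrow> (case G k of None \<Rightarrow> None
                                               | Some r \<Rightarrow> H (pair p r))) = Some q \<and> delta_two q = Some y \<and> y \<in> WFT (Aset p)"
    unfolding realizes_def delta_closed_Aset by (auto simp: WFT_def)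
  then show ?thesis by (cases "K p") auto
qed

definition kp :: "baire \<Rightarrow> baire" where "kp p = the (K p)"

lemma K_kp: "K p = Some (kp p)"
  using K_some[of p] unfolding kp_def by auto

lemma ev_kp: "ev p eK [i] (kp p i)"
  using eK[OF K_kp] by auto

lemma R: "r \<in> totalization C_baire (Aset (kp p)) \<Longrightarrow> ev (pair p r) eH [0] (if Aset p = {} then 1 else 0)"
proof -
  assume r: "r \<in> totalization C_baire (Aset (kp p))"
  define G :: "baire \<Rightarrow> baire option" where
    "G = (\<lambda>k. Some (if k = kp p then r else SOME r. r \<in> totalization C_baire (Aset k)))"
  have "realizes delta_closed delta_baire (totalization C_baire) G"
    unfolding realizes_TC G_def using TC_some r by auto
  from red[OF this] have "\<exists>q y. (case K p of None \<Rightarrow> None | Some k \<Rightarrow> (case G k of None \<Rightarrow> None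
                                               | Some r \<Rightarrow> H (pair p r))) = Some q \<and> delta_two q = Some y \<and> y \<in> WFT (Aset p)"
    unfolding realizes_def delta_closed_Aset by (auto simp: WFT_def)
  then obtain q y where Hq: "H (pair p r) = Some q" and dq: "delta_two q = Some y" and yW: "y \<in> WFT (Aset p)"
    using K_kp G_def by auto
  have e: "ev (pair p r) eH [0] (q 0)" using eH[OF Hq] by blast
  have "q 0 = (if Aset p = {} then 1 else 0)" using dq yW by (auto simp: delta_two_def WFT_def split: if_splits)
  then show ?thesis using e by simp
qed

definition V0 :: "baire \<Rightarrow> bool" where "V0 p \<longleftrightarrow> (\<exists>r. ev (pair p r) eH [0] 0)"
definition S1 :: "baire \<Rightarrow> bool" where "S1 p \<longleftrightarrow> (\<exists>r\<in>Aset (kp p). ev (pair p r) eH [0] 1)"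

lemma red_a: "Aset p \<noteq> {} \<Longrightarrow> V0 p"
proof -
  assume a: "Aset p \<noteq> {}"
  have "ev (pair p (SOME r. r \<in> totalization C_baire (Aset (kp p)))) eH [0] (if Aset p = {} then 1 else 0)"
    by (rule R[OF TC_some])
  then have "ev (pair p (SOME r. r \<in> totalization C_baire (Aset (kp p)))) eH [0] 0"
    using a by simp
  then show ?thesis unfolding V0_def by blast
qed

lemma red_b: "Aset p \<noteq> {} \<Longrightarrow> \<not> S1 p"
proof
  assume a: "Aset p \<noteq> {}" and "S1 p"
  then obtain r where r: "r \<in> Aset (kp p)" and e1: "ev (pair p r) eH [0] 1" unfolding S1_def by blast
  have "ev (pair p r) eH [0] 0" using R[OF TC_in[OF r]] a by simp
  from ev_det[OF e1 this] show False by simp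
qed

lemma red_c: "Aset p = {} \<Longrightarrow> \<not> V0 p \<or> S1 p"
proof -
  assume e: "Aset p = {}"
  show ?thesis
  proof (cases "Aset (kp p) = {}")
    case True
    then have e1: "ev (pair p r) eH [0] 1" for r using R[OF TC_all[OF True]] e by simp
    have "\<not> V0 p" unfolding V0_def
    proof
      assume "\<exists>r. ev (pair p r) eH [0] 0"
      then obtain r where "ev (pair p r) eH [0] 0" by blast
      from ev_det[OF e1[of r] this] show False by simp
    qed
    then show ?thesis by simp
  next
    case False
    then obtain r where "r \<in> Aset (kp p)" by auto
    then have "S1 p" unfolding S1_def using R[OF TC_in] e by fastforce
    then show ?thesis by simp
  qed
qed

definition W0 :: "baire \<Rightarrow> nat \<Rightarrow> bool" where
  "W0 p L \<longleftrightarrow> (\<exists>r. \<forall>p'. agr L p p' \<longrightarrow> ev (pair p' r) eH [0] 0)"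
definition H1w :: "baire \<Rightarrow> nat list \<Rightarrow> nat \<Rightarrow> bool" where
  "H1w p \<rho> n \<longleftrightarrow> (\<forall>p' r'. agr n p p' \<and> (\<forall>i<n. r' i = \<rho> ! i) \<longrightarrow> ev (pair p' r') eH [0] 1)"
definition ballK :: "baire \<Rightarrow> nat \<Rightarrow> nat list \<Rightarrow> bool" where
  "ballK p L \<rho> \<longleftrightarrow> (\<exists>i<L. \<exists>v. (\<forall>p'. agr L p p' \<longrightarrow> ev p' eK [i] v) \<and>
       (\<forall>r'. (\<forall>i<length \<rho>. r' i = \<rho> ! i) \<longrightarrow> r' \<in> basic_open v))"

fun bad :: "baire \<Rightarrow> nat list \<Rightarrow> bool" where
  "bad p [] = False"
| "bad p (0 # \<tau>) = W0 p (Suc (length \<tau>))"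
| "bad p [Suc 0] = False"
| "bad p (Suc 0 # n # \<rho>) = ((n \<le> length \<rho> \<and> \<not> H1w p \<rho> n) \<or> ballK p (length \<rho> + 2) \<rho>)"
| "bad p (Suc (Suc k) # \<tau>) = True"

lemma W0_dep: "agr L p p'' \<Longrightarrow> W0 p L = W0 p'' L"
  unfolding W0_def using all_agr_dep[of L p p''] by simp

lemma H1w_dep: "agr n p p'' \<Longrightarrow> H1w p \<rho> n = H1w p'' \<rho> n"
  unfolding H1w_def using agr_sym agr_trans by blast

lemma ballK_dep: "agr L p p'' \<Longrightarrow> ballK p L \<rho> = ballK p'' L \<rho>"
  unfolding ballK_def using all_agr_dep[of L p p''] by simp

lemma bad_dep: "agr (length \<sigma>) p p' \<Longrightarrow> bad p \<sigma> = bad p' \<sigma>"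
proof (induction p \<sigma> rule: bad.induct)
  case (2 p \<tau>) then show ?case using W0_dep by simp
next
  case (4 p n \<rho>)
  then have a: "agr (length \<rho> + 2) p p'" by simp
  then have "agr n p p'" if "n \<le> length \<rho>" using agr_mono that by fastforce
  then show ?case using a H1w_dep ballK_dep by auto
qed auto

lemma W0_mono: "W0 p L \<Longrightarrow> L \<le> L' \<Longrightarrow> W0 p L'"
  unfolding W0_def using agr_mono by blast

lemma V0_W0: "V0 p \<longleftrightarrow> (\<exists>L. W0 p L)"
proof
  assume "V0 p"
  then obtain r where "ev (pair p r) eH [0] 0" unfolding V0_def by blast
  from ev_cont[OF this] obtain N where N: "\<forall>u. agr N (pair p r) u \<longrightarrow> ev u eH [0] 0" by blast
  have "\<forall>p'. agr N p p' \<longrightarrow> ev (pair p' r) eH [0] 0"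
  proof (intro allI impI)
    fix p' assume "agr N p p'"
    then have "agr N (pair p r) (pair p' r)" using agr_pair[of N p p' r r] by simp
    then show "ev (pair p' r) eH [0] 0" using N by blast
  qed
  then have "W0 p N" unfolding W0_def by blast
  then show "\<exists>L. W0 p L" by blast
next
  assume "\<exists>L. W0 p L"
  then obtain L r where "\<forall>p'. agr L p p' \<longrightarrow> ev (pair p' r) eH [0] 0" unfolding W0_def by blast
  then have "ev (pair p r) eH [0] 0" using agr_refl by blast
  then show "V0 p" unfolding V0_def by blast
qed

definition H1r :: "baire \<Rightarrow> baire \<Rightarrow> nat \<Rightarrow> bool" where
  "H1r p r n \<longleftrightarrow> (\<forall>p' r'. agr n p p' \<and> agr n r r' \<longrightarrow> ev (pair p' r') eH [0] 1)"

lemma H1w_prefix: "n \<le> m \<Longrightarrow> H1w p (prefix r m) n = H1r p r n"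
  unfolding H1w_def H1r_def agr_def by auto

lemma H1r_ev: "(\<exists>n. H1r p r n) \<longleftrightarrow> ev (pair p r) eH [0] 1"
proof
  assume "ev (pair p r) eH [0] 1"
  from ev_cont[OF this] obtain N where N: "\<forall>u. agr N (pair p r) u \<longrightarrow> ev u eH [0] 1" by blast
  have "H1r p r N" unfolding H1r_def
  proof (intro allI impI)
    fix p' r' assume "agr N p p' \<and> agr N r r'"
    then have "agr N (pair p r) (pair p' r')" using agr_pair by blast
    then show "ev (pair p' r') eH [0] 1" using N by blast
  qed
  then show "\<exists>n. H1r p r n" by blast
next
  assume "\<exists>n. H1r p r n"
  then show "ev (pair p r) eH [0] 1" unfolding H1r_def using agr_refl by blast
qed

lemma ballK_iff: "(\<exists>m. ballK p (m + 2) (prefix r m)) \<longleftrightarrow> r \<notin> Aset (kp p)"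
proof
  assume "\<exists>m. ballK p (m + 2) (prefix r m)"
  then obtain m where "ballK p (m + 2) (prefix r m)" by blast
  then obtain i v where i1: "\<forall>p'. agr (m + 2) p p' \<longrightarrow> ev p' eK [i] v"
    and i2: "\<forall>r'. (\<forall>j<length (prefix r m). r' j = prefix r m ! j) \<longrightarrow> r' \<in> basic_open v"
    unfolding ballK_def by blast
  have e: "ev p eK [i] v" using i1 by simp
  have c: "\<forall>r'. (\<forall>i<m. r' i = r i) \<longrightarrow> r' \<in> basic_open v" using i2 by simp
  have "v = kp p i" using ev_det[OF e ev_kp] .
  moreover have "r \<in> basic_open v" using c by auto
  ultimately show "r \<notin> Aset (kp p)" unfolding Aset_def by auto
next
  assume "r \<notin> Aset (kp p)"
  then obtain i where ri: "r \<in> basic_open (kp p i)" unfolding Aset_def by auto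
  then obtain c where c: "kp p i = Suc c" by (cases "kp p i") auto
  from ev_cont[OF ev_kp[of p i]] obtain N where N: "\<forall>p'. agr N p p' \<longrightarrow> ev p' eK [i] (kp p i)" by blast
  define m where "m = max N (max (Suc i) (length (list_decode c)))"
  have i: "i < m + 2" unfolding m_def by auto
  have A: "\<forall>p'. agr (m + 2) p p' \<longrightarrow> ev p' eK [i] (kp p i)"
  proof (intro allI impI)
    fix p' assume "agr (m + 2) p p'"
    then have "agr N p p'" using agr_mono unfolding m_def by fastforce
    then show "ev p' eK [i] (kp p i)" using N by auto
  qed
  have B: "\<forall>r'. (\<forall>j<length (prefix r m). r' j = prefix r m ! j) \<longrightarrow> r' \<in> basic_open (kp p i)"
  proof (intro allI impI)
    fix r' assume a: "\<forall>j<length (prefix r m). r' j = prefix r m ! j"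
    have "\<forall>j<length (list_decode c). r' j = r j" using a unfolding m_def by auto
    then show "r' \<in> basic_open (kp p i)" using ri unfolding c basic_open_def by auto
  qed
  have "ballK p (m + 2) (prefix r m)" unfolding ballK_def using i A B by blast
  then show "\<exists>m. ballK p (m + 2) (prefix r m)" by blast
qed



lemma mem_bad: "(\<forall>n. \<not> bad p (prefix x n)) \<longleftrightarrow>
   (x 0 = 0 \<and> \<not> V0 p) \<or> (x 0 = 1 \<and> H1r p (\<lambda>i. x (Suc (Suc i))) (x 1) \<and> (\<lambda>i. x (Suc (Suc i))) \<in> Aset (kp p))"
proof (cases "x 0")
  case 0
  have "(\<forall>n. \<not> bad p (prefix x n)) \<longleftrightarrow> (\<forall>m. \<not> bad p (prefix x (Suc m)))"
    using all_nat_Suc[of "\<lambda>n. \<not> bad p (prefix x n)"] by simp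
  also have "\<dots> \<longleftrightarrow> (\<forall>m. \<not> W0 p (Suc m))"
    by (simp only: prefix_Suc1 0 bad.simps length_prefix)
  also have "\<dots> \<longleftrightarrow> \<not> V0 p" unfolding V0_W0 by (meson W0_mono le_SucI order.refl)
  finally show ?thesis using 0 by simp
next
  case (Suc k)
  show ?thesis
  proof (cases k)
    case 0
    define r where "r = (\<lambda>i. x (Suc (Suc i)))"
    define n where "n = x 1"
    have x0: "x 0 = Suc 0" using Suc 0 by simp
    have "(\<forall>N. \<not> bad p (prefix x N)) \<longleftrightarrow> (\<forall>m. \<not> bad p (prefix x (Suc (Suc m))))"
      using all_nat_SS[of "\<lambda>n. \<not> bad p (prefix x n)"] x0 by simp
    also have "\<dots> \<longleftrightarrow> (\<forall>m. \<not> ((n \<le> m \<and> \<not> H1w p (prefix r m) n) \<or> ballK p (m + 2) (prefix r m)))"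
      by (simp only: prefix_Suc2 x0 bad.simps length_prefix r_def n_def)
    also have "\<dots> \<longleftrightarrow> (\<forall>m. n \<le> m \<longrightarrow> H1w p (prefix r m) n) \<and> (\<forall>m. \<not> ballK p (m + 2) (prefix r m))"
      by blast
    also have "(\<forall>m. n \<le> m \<longrightarrow> H1w p (prefix r m) n) \<longleftrightarrow> H1r p r n"
      using H1w_prefix[of n _ p r] by auto
    also have "(\<forall>m. \<not> ballK p (m + 2) (prefix r m)) \<longleftrightarrow> r \<in> Aset (kp p)"
      using ballK_iff[of p r] by blast
    finally show ?thesis using x0 r_def n_def by simp
  next
    case (Suc j)
    have "bad p (prefix x 1)" using \<open>x 0 = Suc k\<close> Suc by simp
    then have "\<exists>n. bad p (prefix x n)" by blast
    then show ?thesis using \<open>x 0 = Suc k\<close> Suc by auto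
  qed
qed

lemma false2: False
proof -
  obtain p where p: "Aset p = {x. \<forall>n. \<not> bad p (prefix x n)}"
    using diag[of bad] bad_dep by blast
  have "Aset p \<noteq> {} \<longleftrightarrow> \<not> V0 p \<or> S1 p"
  proof
    assume "Aset p \<noteq> {}"
    then obtain x where "x \<in> Aset p" by auto
    then show "\<not> V0 p \<or> S1 p" using p mem_bad[of p x] H1r_ev unfolding S1_def by blast
  next
    assume "\<not> V0 p \<or> S1 p"
    then show "Aset p \<noteq> {}"
    proof
      assume "\<not> V0 p"
      then have "(\<lambda>_. 0) \<in> Aset p" using p mem_bad[of p "\<lambda>_. 0"] by simp
      then show ?thesis by auto
    next
      assume "S1 p"
      then obtain r n where r: "r \<in> Aset (kp p)" "H1r p r n" unfolding S1_def using H1r_ev by blast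
      define x where "x = (\<lambda>i. if i = 0 then 1 else if i = 1 then n else r (i - 2))"
      have "(\<lambda>i. x (Suc (Suc i))) = r" unfolding x_def by auto
      then have "x \<in> Aset p" using p mem_bad[of p x] r unfolding x_def by simp
      then show ?thesis by auto
    qed
  qed
  then show False using red_a red_b red_c by blast
qed

end


lemma enum_atLeast: "enumerate {M::nat..} k = M + k"
proof (induction k arbitrary: M)
  case 0 then show ?case by (simp add: enumerate_0 Least_equality)
next
  case (Suc k)
  have l: "(LEAST n. M \<le> n) = M" by (simp add: Least_equality)
  have "{M..} - {M} = {Suc M..}" by auto
  then show ?case using Suc[of "Suc M"] l by (simp add: enumerate_Suc)
qed

lemma inf_atLeast: "infinite {M::nat..}"
  unfolding infinite_nat_iff_unbounded_le by (meson atLeast_iff nat_le_linear)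

definition qM :: "baire \<Rightarrow> nat \<Rightarrow> baire" where
  "qM x M = (\<lambda>n. if n < M then 0 else Suc (x (n - M)))"

lemma qM_nz: "{n. 0 < qM x M n} = {M..}"
  unfolding qM_def by auto

lemma qM_inf: "infinite {n. 0 < qM x M n}"
  unfolding qM_nz by (rule inf_atLeast)

lemma qM_minus: "minus_one (qM x M) = x"
  unfolding minus_one_def qM_nz enum_atLeast by (simp add: qM_def)

lemma qM_0: "qM x 0 = (\<lambda>i. Suc (x i))"
  unfolding qM_def by simp

definition nzinf :: "baire \<Rightarrow> bool" where "nzinf k \<longleftrightarrow> infinite {n. 0 < k n}"

definition A'k :: "baire \<Rightarrow> baire set" where
  "A'k k = {x. \<forall>n. 0 < k n \<longrightarrow> x \<notin> basic_open (k n - 1)}"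

lemma Ak_eq: "nzinf k \<Longrightarrow> Aset (minus_one k) = A'k k"
proof -
  assume "nzinf k"
  then have r: "range (enumerate {n. 0 < k n}) = {n. 0 < k n}"
    unfolding nzinf_def by (rule range_enumerate)
  have "(\<Union>m. basic_open (minus_one k m)) = (\<Union>n\<in>{n. 0 < k n}. basic_open (k n - 1))"
  proof -
    have "(\<Union>m. basic_open (minus_one k m)) = (\<Union>n\<in>range (enumerate {n. 0 < k n}). basic_open (k n - 1))"
      unfolding minus_one_def by auto
    then show ?thesis using r by simp
  qed
  then show ?thesis unfolding Aset_def A'k_def by auto
qed

definition validC :: "baire \<Rightarrow> baire \<Rightarrow> bool" where
  "validC k q \<longleftrightarrow> \<not> nzinf k \<or> Aset (minus_one k) = {} \<or> (nzinf q \<and> minus_one q \<in> Aset (minus_one k))"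

lemma completion_closed: "completion delta_closed k = (if nzinf k then Some (Some (Aset (minus_one k))) else Some None)"
  unfolding completion_def nzinf_def delta_closed_Aset by simp

lemma completion_baire: "completion delta_baire q = (if nzinf q then Some (Some (minus_one q)) else Some None)"
  unfolding completion_def nzinf_def delta_baire_def by simp

lemma realizes_CI:
  assumes "\<forall>k. \<exists>q. G k = Some q \<and> validC k q"
  shows "realizes (completion delta_closed) (completion delta_baire) (pcompletion C_baire) G"
  unfolding realizes_def
proof (intro allI impI)
  fix k x assume a: "completion delta_closed k = Some x \<and> pcompletion C_baire x \<noteq> {}"
  from assms obtain q where Gk: "G k = Some q" and v: "validC k q" by blast
  show "\<exists>q y. G k = Some q \<and> completion delta_baire q = Some y \<and> y \<in> pcompletion C_baire x"
  proof (cases "nzinf k \<and> Aset (minus_one k) \<noteq> {}")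
    case True
    then have x: "x = Some (Aset (minus_one k))" using a by (simp add: completion_closed)
    have "nzinf q" "minus_one q \<in> Aset (minus_one k)" using v True unfolding validC_def by auto
    then show ?thesis using Gk x True
      by (auto simp: completion_baire pcompletion_def C_baire_def)
  next
    case False
    then have "pcompletion C_baire x = UNIV" using a
      by (auto simp: completion_closed pcompletion_def C_baire_def split: if_splits)
    then show ?thesis using Gk by (simp add: completion_baire)
  qed
qed

lemma validC_suc: "x \<in> Aset (minus_one k) \<Longrightarrow> validC k (\<lambda>i. Suc (x i))"
  unfolding validC_def nzinf_def using qM_inf[of x 0] qM_minus[of x 0] by (simp add: qM_0)

lemma validC_ex: "\<exists>q. validC k q"
proof (cases "Aset (minus_one k) = {}")
  case True then show ?thesis unfolding validC_def by auto
next
  case False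
  then obtain x where "x \<in> Aset (minus_one k)" by auto
  then show ?thesis using validC_suc by blast
qed

lemma validC_some: "validC k (SOME q. validC k q)"
  using validC_ex by (rule someI_ex)

context
  fixes H K :: "baire \<Rightarrow> baire option" and eH eK :: recf
  assumes eK: "\<And>p k. K p = Some k \<Longrightarrow> \<forall>n. ev p eK [n] (k n)"
    and eH: "\<And>u q. H u = Some q \<Longrightarrow> \<forall>n. ev u eH [n] (q n)"
    and red: "\<And>G. realizes (completion delta_closed) (completion delta_baire) (pcompletion C_baire) G \<Longrightarrow>
       realizes delta_closed delta_sierp WFT (\<lambda>p. case K p of None \<Rightarrow> None
                                 | Some k \<Rightarrow> (case G k of None \<Rightarrow> None
                                               | Some r \<Rightarrow> H (pair p r)))"
begin

lemma redD: "realizes (completion delta_closed) (completion delta_baire) (pcompletion C_baire) G \<Longrightarrow>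
  \<exists>k r q y. K p = Some k \<and> G k = Some r \<and> H (pair p r) = Some q \<and> delta_sierp q = Some y \<and> y \<in> WFT (Aset p)"
  using realizes_compD[OF red, of G p "Aset p"] by (simp add: delta_closed_Aset WFT_def)

lemma K_some1: "\<exists>k. K p = Some k"
proof -
  define G :: "baire \<Rightarrow> baire option" where "G = (\<lambda>k. Some (SOME q. validC k q))"
  have "realizes (completion delta_closed) (completion delta_baire) (pcompletion C_baire) G"
    by (rule realizes_CI) (simp add: G_def validC_some)
  from redD[OF this, of p] show ?thesis by blast
qed

definition kp1 :: "baire \<Rightarrow> baire" where "kp1 p = the (K p)"

lemma K_kp1: "K p = Some (kp1 p)"
  using K_some1[of p] unfolding kp1_def by auto

lemma ev_kp1: "ev p eK [i] (kp1 p i)"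
  using eK[OF K_kp1] by auto

lemma R1:
  assumes v: "validC (kp1 p) q"
  shows "(Aset p \<noteq> {} \<longrightarrow> (\<forall>j. ev (pair p q) eH [j] 0)) \<and>
         (Aset p = {} \<longrightarrow> (\<exists>j v. v \<noteq> 0 \<and> ev (pair p q) eH [j] v))"
proof -
  define G :: "baire \<Rightarrow> baire option" where
    "G = (\<lambda>k. Some (if k = kp1 p then q else SOME q. validC k q))"
  have "realizes (completion delta_closed) (completion delta_baire) (pcompletion C_baire) G"
    by (rule realizes_CI) (simp add: G_def validC_some v)
  from redD[OF this, of p] obtain s y where Hs: "H (pair p q) = Some s" and ds: "delta_sierp s = Some y"
    and yW: "y \<in> WFT (Aset p)"
    using K_kp1 G_def by auto
  have e: "\<forall>n. ev (pair p q) eH [n] (s n)" using eH[OF Hs] .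
  have y1: "y = (if s = (\<lambda>_. 0) then 0 else 1)" using ds by (simp add: delta_sierp_def)
  have y2: "y = (if Aset p = {} then 1 else 0)" using yW by (simp add: WFT_def)
  have sy: "(s = (\<lambda>_. 0)) \<longleftrightarrow> Aset p \<noteq> {}"
  proof (cases "s = (\<lambda>_. 0)")
    case True
    then have y0: "y = 0" using y1 by simp
    have "Aset p \<noteq> {}"
    proof
      assume "Aset p = {}"
      then have "y = 1" using y2 by simp
      then show False using y0 by simp
    qed
    then show ?thesis using True by blast
  next
    case False
    then have y0: "y = 1" using y1 by simp
    have "Aset p = {}"
    proof (rule ccontr)
      assume "Aset p \<noteq> {}"
      then have "y = 0" using y2 by simp
      then show False using y0 by simp
    qed
    then show ?thesis using False by blast
  qed
  show ?thesis
  proof (intro conjI impI)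
    assume "Aset p \<noteq> {}"
    then have "s = (\<lambda>_. 0)" using sy by simp
    then show "\<forall>j. ev (pair p q) eH [j] 0" using e by simp
  next
    assume "Aset p = {}"
    then have "s \<noteq> (\<lambda>_. 0)" using sy by simp
    then obtain j where "s j \<noteq> 0" by auto
    then show "\<exists>j v. v \<noteq> 0 \<and> ev (pair p q) eH [j] v" using e by blast
  qed
qed

definition Wp :: "baire \<Rightarrow> bool" where
  "Wp p \<longleftrightarrow> (\<exists>j v. v \<noteq> 0 \<and> ev (pair p (\<lambda>_. 0)) eH [j] v)"
definition S1p :: "baire \<Rightarrow> bool" where
  "S1p p \<longleftrightarrow> (\<exists>j x. x \<in> A'k (kp1 p) \<and> \<not> ev (pair p (\<lambda>i. Suc (x i))) eH [j] 0)"

lemma red1_i: "Aset p \<noteq> {} \<Longrightarrow> \<not> Wp p"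
proof
  assume a: "Aset p \<noteq> {}" and "Wp p"
  then obtain j v where v: "v \<noteq> 0" and e: "ev (pair p (\<lambda>_. 0)) eH [j] v" unfolding Wp_def by blast
  show False
  proof (cases "validC (kp1 p) (\<lambda>_. 0)")
    case True
    then have "ev (pair p (\<lambda>_. 0)) eH [j] 0" using R1 a by blast
    from ev_det[OF e this] show False using v by simp
  next
    case False
    then have "Aset (minus_one (kp1 p)) \<noteq> {}" unfolding validC_def by auto
    then obtain x where x: "x \<in> Aset (minus_one (kp1 p))" by auto
    from ev_cont[OF e] obtain N where N: "\<forall>u. agr N (pair p (\<lambda>_. 0)) u \<longrightarrow> ev u eH [j] v" by blast
    have "agr N (\<lambda>_. 0) (qM x N)" unfolding agr_def qM_def by simp
    then have "agr N (pair p (\<lambda>_. 0)) (pair p (qM x N))" using agr_pair agr_refl by blast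
    then have e2: "ev (pair p (qM x N)) eH [j] v" using N by blast
    have "validC (kp1 p) (qM x N)" unfolding validC_def nzinf_def using qM_inf qM_minus x by simp
    then have "ev (pair p (qM x N)) eH [j] 0" using R1 a by blast
    from ev_det[OF e2 this] show False using v by simp
  qed
qed

lemma validC_A'k: "x \<in> A'k (kp1 p) \<Longrightarrow> validC (kp1 p) (\<lambda>i. Suc (x i))"
proof (cases "nzinf (kp1 p)")
  case True
  assume "x \<in> A'k (kp1 p)"
  then have "x \<in> Aset (minus_one (kp1 p))" using Ak_eq[OF True] by simp
  then show ?thesis by (rule validC_suc)
next
  case False then show ?thesis unfolding validC_def by simp
qed

lemma red1_ii: "Aset p \<noteq> {} \<Longrightarrow> \<not> S1p p"
proof
  assume a: "Aset p \<noteq> {}" and "S1p p"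
  then obtain j x where x: "x \<in> A'k (kp1 p)" and ne: "\<not> ev (pair p (\<lambda>i. Suc (x i))) eH [j] 0"
    unfolding S1p_def by blast
  have "ev (pair p (\<lambda>i. Suc (x i))) eH [j] 0" using R1[OF validC_A'k[OF x]] a by blast
  then show False using ne by simp
qed

lemma red1_iii: "Aset p = {} \<Longrightarrow> Wp p \<or> S1p p"
proof -
  assume a: "Aset p = {}"
  show ?thesis
  proof (cases "validC (kp1 p) (\<lambda>_. 0)")
    case True
    then have "Wp p" using R1 a unfolding Wp_def by blast
    then show ?thesis by simp
  next
    case False
    then have nz: "nzinf (kp1 p)" and "Aset (minus_one (kp1 p)) \<noteq> {}" unfolding validC_def by auto
    then obtain x where x: "x \<in> Aset (minus_one (kp1 p))" by auto
    then have x': "x \<in> A'k (kp1 p)" using Ak_eq[OF nz] by simp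
    obtain j v where v: "v \<noteq> 0" and e: "ev (pair p (\<lambda>i. Suc (x i))) eH [j] v"
      using R1[OF validC_suc[OF x]] a by blast
    have "\<not> ev (pair p (\<lambda>i. Suc (x i))) eH [j] 0"
    proof
      assume "ev (pair p (\<lambda>i. Suc (x i))) eH [j] 0"
      from ev_det[OF e this] show False using v by simp
    qed
    then have "S1p p" unfolding S1p_def using x' by blast
    then show ?thesis by simp
  qed
qed


definition HaltW :: "baire \<Rightarrow> nat \<Rightarrow> bool" where
  "HaltW p n \<longleftrightarrow> (\<exists>j v. v \<noteq> 0 \<and> (\<forall>p'. agr n p p' \<longrightarrow> ev (pair p' (\<lambda>_. 0)) eH [j] v))"
definition ZeroW :: "baire \<Rightarrow> nat \<Rightarrow> nat list \<Rightarrow> nat \<Rightarrow> bool" where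
  "ZeroW p j \<rho> L \<longleftrightarrow> (\<forall>p' r'. agr L p p' \<and> (\<forall>i<length \<rho>. r' i = Suc (\<rho> ! i)) \<longrightarrow> ev (pair p' r') eH [j] 0)"
definition ballK1 :: "baire \<Rightarrow> nat \<Rightarrow> nat list \<Rightarrow> bool" where
  "ballK1 p L \<rho> \<longleftrightarrow> (\<exists>i<L. \<exists>v. 0 < v \<and> (\<forall>p'. agr L p p' \<longrightarrow> ev p' eK [i] v) \<and>
       (\<forall>r'. (\<forall>i<length \<rho>. r' i = \<rho> ! i) \<longrightarrow> r' \<in> basic_open (v - 1)))"

fun bad1 :: "baire \<Rightarrow> nat list \<Rightarrow> bool" where
  "bad1 p [] = False"
| "bad1 p [0] = False"
| "bad1 p (0 # n # \<tau>) = (n \<le> length \<tau> \<and> \<not> HaltW p n)"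
| "bad1 p [Suc 0] = False"
| "bad1 p (Suc 0 # j # \<rho>) = (ballK1 p (length \<rho> + 2) \<rho> \<or> ZeroW p j \<rho> (length \<rho> + 2))"
| "bad1 p (Suc (Suc k) # \<tau>) = True"

lemma HaltW_dep: "agr n p p'' \<Longrightarrow> HaltW p n = HaltW p'' n"
  unfolding HaltW_def using all_agr_dep[of n p p''] by simp

lemma ZeroW_dep: "agr L p p'' \<Longrightarrow> ZeroW p j \<rho> L = ZeroW p'' j \<rho> L"
  unfolding ZeroW_def using agr_sym agr_trans by blast

lemma ballK1_dep: "agr L p p'' \<Longrightarrow> ballK1 p L \<rho> = ballK1 p'' L \<rho>"
  unfolding ballK1_def using all_agr_dep[of L p p''] by simp

lemma bad1_dep: "agr (length \<sigma>) p p' \<Longrightarrow> bad1 p \<sigma> = bad1 p' \<sigma>"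
proof (induction p \<sigma> rule: bad1.induct)
  case (3 p n \<tau>)
  then have a: "agr (length \<tau> + 2) p p'" by simp
  then have "agr n p p'" if "n \<le> length \<tau>" using agr_mono that by fastforce
  then show ?case using HaltW_dep by auto
next
  case (5 p j \<rho>)
  then have a: "agr (length \<rho> + 2) p p'" by simp
  then show ?case using ZeroW_dep ballK1_dep by simp
qed auto

lemma HaltW_mono: "HaltW p n \<Longrightarrow> n \<le> n' \<Longrightarrow> HaltW p n'"
  unfolding HaltW_def using agr_mono by blast

lemma Wp_HaltW: "Wp p \<longleftrightarrow> (\<exists>n. HaltW p n)"
proof
  assume "Wp p"
  then obtain j v where v: "v \<noteq> 0" and e: "ev (pair p (\<lambda>_. 0)) eH [j] v" unfolding Wp_def by blast
  from ev_cont[OF e] obtain N where N: "\<forall>u. agr N (pair p (\<lambda>_. 0)) u \<longrightarrow> ev u eH [j] v" by blast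
  have "\<forall>p'. agr N p p' \<longrightarrow> ev (pair p' (\<lambda>_. 0)) eH [j] v"
  proof (intro allI impI)
    fix p' assume "agr N p p'"
    then have "agr N (pair p (\<lambda>_. 0)) (pair p' (\<lambda>_. 0))" using agr_pair[of N p p' "\<lambda>_. 0" "\<lambda>_. 0"] by simp
    then show "ev (pair p' (\<lambda>_. 0)) eH [j] v" using N by blast
  qed
  then have "HaltW p N" unfolding HaltW_def using v by blast
  then show "\<exists>n. HaltW p n" by blast
next
  assume "\<exists>n. HaltW p n"
  then obtain n j v where "v \<noteq> 0" "\<forall>p'. agr n p p' \<longrightarrow> ev (pair p' (\<lambda>_. 0)) eH [j] v"
    unfolding HaltW_def by blast
  then show "Wp p" unfolding Wp_def using agr_refl by blast
qed

lemma Zero_iff: "(\<exists>m. ZeroW p j (prefix x m) (m + 2)) \<longleftrightarrow> ev (pair p (\<lambda>i. Suc (x i))) eH [j] 0"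
proof
  assume "\<exists>m. ZeroW p j (prefix x m) (m + 2)"
  then obtain m where "ZeroW p j (prefix x m) (m + 2)" by blast
  then have "\<forall>p' r'. agr (m + 2) p p' \<and> (\<forall>i<m. r' i = Suc (x i)) \<longrightarrow> ev (pair p' r') eH [j] 0"
    unfolding ZeroW_def by simp
  from this[rule_format, of p "\<lambda>i. Suc (x i)"] show "ev (pair p (\<lambda>i. Suc (x i))) eH [j] 0" by simp
next
  assume e: "ev (pair p (\<lambda>i. Suc (x i))) eH [j] 0"
  from ev_cont[OF e] obtain N where N: "\<forall>u. agr N (pair p (\<lambda>i. Suc (x i))) u \<longrightarrow> ev u eH [j] 0" by blast
  have "ZeroW p j (prefix x N) (N + 2)" unfolding ZeroW_def
  proof (intro allI impI)
    fix p' r' assume a: "agr (N + 2) p p' \<and> (\<forall>i<length (prefix x N). r' i = Suc (prefix x N ! i))"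
    then have "agr N p p'" using agr_mono[of "N+2" p p' N] by simp
    moreover have "agr N (\<lambda>i. Suc (x i)) r'" using a unfolding agr_def by simp
    ultimately have "agr N (pair p (\<lambda>i. Suc (x i))) (pair p' r')" using agr_pair by blast
    then show "ev (pair p' r') eH [j] 0" using N by blast
  qed
  then show "\<exists>m. ZeroW p j (prefix x m) (m + 2)" by blast
qed

lemma ballK1_iff: "(\<exists>m. ballK1 p (m + 2) (prefix r m)) \<longleftrightarrow> r \<notin> A'k (kp1 p)"
proof
  assume "\<exists>m. ballK1 p (m + 2) (prefix r m)"
  then obtain m where "ballK1 p (m + 2) (prefix r m)" by blast
  then obtain i v where v0: "0 < v" and i1: "\<forall>p'. agr (m + 2) p p' \<longrightarrow> ev p' eK [i] v"
    and i2: "\<forall>r'. (\<forall>j<length (prefix r m). r' j = prefix r m ! j) \<longrightarrow> r' \<in> basic_open (v - 1)"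
    unfolding ballK1_def by blast
  have e: "ev p eK [i] v" using i1 by simp
  have c: "\<forall>r'. (\<forall>i<m. r' i = r i) \<longrightarrow> r' \<in> basic_open (v - 1)" using i2 by simp
  have "v = kp1 p i" using ev_det[OF e ev_kp1] .
  moreover have "r \<in> basic_open (v - 1)" using c by auto
  ultimately show "r \<notin> A'k (kp1 p)" unfolding A'k_def using v0 by auto
next
  assume "r \<notin> A'k (kp1 p)"
  then obtain i where pos: "0 < kp1 p i" and ri: "r \<in> basic_open (kp1 p i - 1)" unfolding A'k_def by auto
  then obtain c where c: "kp1 p i - 1 = Suc c" by (cases "kp1 p i - 1") auto
  from ev_cont[OF ev_kp1[of p i]] obtain N where N: "\<forall>p'. agr N p p' \<longrightarrow> ev p' eK [i] (kp1 p i)" by blast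
  define m where "m = max N (max (Suc i) (length (list_decode c)))"
  have i: "i < m + 2" unfolding m_def by auto
  have A: "\<forall>p'. agr (m + 2) p p' \<longrightarrow> ev p' eK [i] (kp1 p i)"
  proof (intro allI impI)
    fix p' assume "agr (m + 2) p p'"
    then have "agr N p p'" using agr_mono unfolding m_def by fastforce
    then show "ev p' eK [i] (kp1 p i)" using N by auto
  qed
  have B: "\<forall>r'. (\<forall>j<length (prefix r m). r' j = prefix r m ! j) \<longrightarrow> r' \<in> basic_open (kp1 p i - 1)"
  proof (intro allI impI)
    fix r' assume a: "\<forall>j<length (prefix r m). r' j = prefix r m ! j"
    have "\<forall>j<length (list_decode c). r' j = r j" using a unfolding m_def by auto
    then show "r' \<in> basic_open (kp1 p i - 1)" using ri unfolding c basic_open_def by auto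
  qed
  have "ballK1 p (m + 2) (prefix r m)" unfolding ballK1_def using i A B pos by blast
  then show "\<exists>m. ballK1 p (m + 2) (prefix r m)" by blast
qed

lemma mem_bad1: "(\<forall>n. \<not> bad1 p (prefix x n)) \<longleftrightarrow>
   (x 0 = 0 \<and> HaltW p (x 1)) \<or>
   (x 0 = 1 \<and> (\<lambda>i. x (Suc (Suc i))) \<in> A'k (kp1 p) \<and> \<not> ev (pair p (\<lambda>i. Suc (x (Suc (Suc i))))) eH [x 1] 0)"
proof -
  define r where "r = (\<lambda>i. x (Suc (Suc i)))"
  define n where "n = x 1"
  have base: "(\<forall>N. \<not> bad1 p (prefix x N)) \<longleftrightarrow> \<not> bad1 p [x 0] \<and> (\<forall>m. \<not> bad1 p (x 0 # n # prefix r m))"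
    using all_nat_SS[of "\<lambda>N. \<not> bad1 p (prefix x N)"] unfolding prefix_Suc2 r_def n_def by simp
  show ?thesis
  proof (cases "x 0")
    case 0
    have "(\<forall>N. \<not> bad1 p (prefix x N)) \<longleftrightarrow> (\<forall>m. \<not> (n \<le> m \<and> \<not> HaltW p n))"
      unfolding base 0 by simp
    also have "\<dots> \<longleftrightarrow> HaltW p n" by auto
    finally show ?thesis using 0 n_def by simp
  next
    case (Suc k)
    show ?thesis
    proof (cases k)
      case 0
      have x0: "x 0 = Suc 0" using Suc 0 by simp
      have "(\<forall>N. \<not> bad1 p (prefix x N)) \<longleftrightarrow> (\<forall>m. \<not> (ballK1 p (m + 2) (prefix r m) \<or> ZeroW p n (prefix r m) (m + 2)))"
        unfolding base x0 by simp
      also have "\<dots> \<longleftrightarrow> (\<forall>m. \<not> ballK1 p (m + 2) (prefix r m)) \<and> (\<forall>m. \<not> ZeroW p n (prefix r m) (m + 2))"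
        by blast
      also have "(\<forall>m. \<not> ballK1 p (m + 2) (prefix r m)) \<longleftrightarrow> r \<in> A'k (kp1 p)"
        using ballK1_iff[of p r] by blast
      also have "(\<forall>m. \<not> ZeroW p n (prefix r m) (m + 2)) \<longleftrightarrow> \<not> ev (pair p (\<lambda>i. Suc (r i))) eH [n] 0"
        using Zero_iff[of p n r] by blast
      finally show ?thesis using x0 r_def n_def by simp
    next
      case (Suc j)
      have "bad1 p (prefix x 1)" using \<open>x 0 = Suc k\<close> Suc by simp
      then have "\<exists>n. bad1 p (prefix x n)" by blast
      then show ?thesis using \<open>x 0 = Suc k\<close> Suc by auto
    qed
  qed
qed

lemma false1: False
proof -
  obtain p where p: "Aset p = {x. \<forall>n. \<not> bad1 p (prefix x n)}"
    using diag[of bad1] bad1_dep by blast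
  have "Aset p \<noteq> {} \<longleftrightarrow> Wp p \<or> S1p p"
  proof
    assume "Aset p \<noteq> {}"
    then obtain x where "x \<in> Aset p" by auto
    then have "(x 0 = 0 \<and> HaltW p (x 1)) \<or>
      (x 0 = 1 \<and> (\<lambda>i. x (Suc (Suc i))) \<in> A'k (kp1 p) \<and> \<not> ev (pair p (\<lambda>i. Suc (x (Suc (Suc i))))) eH [x 1] 0)"
      using p mem_bad1[of p x] by blast
    then show "Wp p \<or> S1p p" unfolding Wp_HaltW S1p_def by blast
  next
    assume "Wp p \<or> S1p p"
    then show "Aset p \<noteq> {}"
    proof
      assume "Wp p"
      then obtain n where h: "HaltW p n" unfolding Wp_HaltW by blast
      define x :: baire where "x = (\<lambda>i. if i = 1 then n else 0)"
      have "x \<in> Aset p" using p mem_bad1[of p x] h unfolding x_def by simp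
      then show ?thesis by auto
    next
      assume "S1p p"
      then obtain j y where y: "y \<in> A'k (kp1 p)" "\<not> ev (pair p (\<lambda>i. Suc (y i))) eH [j] 0"
        unfolding S1p_def by blast
      define x where "x = (\<lambda>i. if i = 0 then 1 else if i = 1 then j else y (i - 2))"
      have "(\<lambda>i. x (Suc (Suc i))) = y" unfolding x_def by auto
      then have "x \<in> Aset p" using p mem_bad1[of p x] y unfolding x_def by simp
      then show ?thesis by auto
    qed
  qed
  then show False using red1_i red1_ii red1_iii by blast
qed

end


lemma part2b: "\<not> weihrauch_le delta_closed delta_two WFT delta_closed delta_baire (totalization C_baire)"
proof
  assume "weihrauch_le delta_closed delta_two WFT delta_closed delta_baire (totalization C_baire)"
  then obtain H K where cH: "computable H" and cK: "computable K" and
    red: "\<forall>G. realizes delta_closed delta_baire (totalization C_baire) G \<longrightarrow>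
           realizes delta_closed delta_two WFT (\<lambda>p. case K p of None \<Rightarrow> None
                                 | Some k \<Rightarrow> (case G k of None \<Rightarrow> None
                                               | Some r \<Rightarrow> H (pair p r)))"
    unfolding weihrauch_le_def by blast
  from cH obtain eH where eH: "\<forall>p q. H p = Some q \<longrightarrow> (\<forall>n. ev p eH [n] (q n))" unfolding computable_def by blast
  from cK obtain eK where eK: "\<forall>p q. K p = Some q \<longrightarrow> (\<forall>n. ev p eK [n] (q n))" unfolding computable_def by blast
  show False
    by (rule false2[of K eK H eH]) (use eH eK red in blast)+
qed

lemma part1b: "\<not> weihrauch_le delta_closed delta_sierp WFT
            (completion delta_closed) (completion delta_baire) (pcompletion C_baire)"
proof
  assume "weihrauch_le delta_closed delta_sierp WFT
            (completion delta_closed) (completion delta_baire) (pcompletion C_baire)"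
  then obtain H K where cH: "computable H" and cK: "computable K" and
    red: "\<forall>G. realizes (completion delta_closed) (completion delta_baire) (pcompletion C_baire) G \<longrightarrow>
           realizes delta_closed delta_sierp WFT (\<lambda>p. case K p of None \<Rightarrow> None
                                 | Some k \<Rightarrow> (case G k of None \<Rightarrow> None
                                               | Some r \<Rightarrow> H (pair p r)))"
    unfolding weihrauch_le_def by blast
  from cH obtain eH where eH: "\<forall>p q. H p = Some q \<longrightarrow> (\<forall>n. ev p eH [n] (q n))" unfolding computable_def by blast
  from cK obtain eK where eK: "\<forall>p q. K p = Some q \<longrightarrow> (\<forall>n. ev p eK [n] (q n))" unfolding computable_def by blast
  show False
    by (rule false1[of K eK H eH]) (use eH eK red in blast)+
qed

theorem proposition11p4:
  shows "(weihrauch_le delta_closed delta_sierp WFT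
            delta_closed delta_baire (totalization C_baire)
          \<and> \<not> weihrauch_le delta_closed delta_sierp WFT
            (completion delta_closed) (completion delta_baire) (pcompletion C_baire))
       \<and> (weihrauch_le_cprod delta_closed delta_two WFT
            delta_closed delta_baire C_baire
            delta_closed delta_baire (totalization C_baire)
          \<and> \<not> weihrauch_le delta_closed delta_two WFT
            delta_closed delta_baire (totalization C_baire))"
  using part1a part1b part2a part2b by blast


end
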